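(* Let $k$ be a field and let $\mathcal C$ be a conilpotent coalgebra over $k$ such that the $k$-vector space $H^1(\mathcal C)$ is finite-dimensional. Then the forgetful functor from the category of left $\mathcal C$-contramodules to the category of left $\mathcal C^\vee$-modules, $\mathcal C\text{-contra}\to\mathcal C^\vee\text{-mod}$, is fully faithful. Moreover, for any dense subring $R$ of the topological ring $\mathcal C^\vee$, the forgetful functor $\mathcal C\text{-contra}\to R\text{-mod}$ is fully faithful.
   Context: A coalgebra $\mathcal C$ over $k$ is a vector space with coassociative comultiplication $\mu:\mathcal C\to\mathcal C\otimes_k\mathcal C$, $c\mapsto\sum c_{(1)}\otimes c_{(2)}$, and counit $\varepsilon:\mathcal C\to k$. It is coaugmented if endowed with a coalgebra morphism $\gamma:k\to\mathcal C$; then $\mathcal C_+=\mathcal C/\gamma(k)$ is a coalgebra without counit, and $\mathcal C$ is called conilpotent if for every $x\in\mathcal C_+$ some iterated comultiplication $\mathcal C_+\to\mathcal C_+^{\otimes m+1}$ annihilates $x$ (such a coaugmentation is then unique). One sets $H^1(\mathcal C)=\ker(\mathcal C_+\to\mathcal C_+\otimes_k\mathcal C_+)$ (the kernel of the induced comultiplication). A left $\mathcal C$-contramodule is a $k$-vector space $P$ with a linear map $\pi_P:\mathrm{Hom}_k(\mathcal C,P)\to P$ such that (contraassociativity) the two maps $\mathrm{Hom}_k(\mathcal C,\mathrm{Hom}_k(\mathcal C,P))\cong\mathrm{Hom}_k(\mathcal C\otimes_k\mathcal C,P)\rightrightarrows\mathrm{Hom}_k(\mathcal C,P)$, one induced by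 $\mu$ and the other by $\pi_P$, have equal compositions with $\pi_P$ (here $\mathrm{Hom}_k(V,\mathrm{Hom}_k(U,W))\cong\mathrm{Hom}_k(U\otimes_k V,W)$ is used), and (contraunitality) the composition $P\to\mathrm{Hom}_k(\mathcal C,P)\to P$ of the map induced by $\varepsilon$ with $\pi_P$ is the identity; morphisms are linear maps commuting with the contraactions. The dual vector space $\mathcal C^\vee=\mathrm{Hom}_k(\mathcal C,k)$ is an associative algebra with multiplication $(\phi\psi)(c)=\sum\psi(c_{(1)})\phi(c_{(2)})$, and every left $\mathcal C$-contramodule $P$ is a left $\mathcal C^\vee$-module via $\phi\cdot p=\pi_P(c\mapsto\phi(c)p)$; this defines the forgetful functor. $\mathcal C^\vee$ carries the (pseudo-compact) topology in which the annihilators of finite-dimensional subspaces of $\mathcal C$ form a base of neighborhoods of zero; a dense subring $R$ is a subring (containing the unit) dense in this topology, and $R$-modules structures on contramodules are obtained by restriction. *)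

theory Defs
  imports Main "HOL.Vector_Spaces"
begin

text \<open>A k-vector space
is a type with an additive group structure and a scalar multiplication s for
which vector_space s holds (HOL.Vector_Spaces).  k-linear maps are linear s1 s2 f.
Hom_k(V,W) is represented by the HOL functions V => W which are linear.

Tensor products are not available in the library; an element of C (x) C is
represented by a finite list of pairs (Sweedler notation), and two such
representatives are equal in C (x) C iff all k-valued bilinear forms agree on
them (bilinear forms separate points of a tensor product of vector spaces).
Similarly for higher tensor powers (lists of lists) with multilinear forms.\<close>

definition bilinear_form :: "('k::field \<Rightarrow> 'c::ab_group_add \<Rightarrow> 'c) \<Rightarrow> ('c \<Rightarrow> 'c \<Rightarrow> 'k) \<Rightarrow> bool" where
  "bilinear_form sC b \<longleftrightarrow>
     (\<forall>y. Vector_Spaces.linear sC (*) (\<lambda>x. b x y)) \<and> (\<forall>x. Vector_Spaces.linear sC (*) (\<lambda>y. b x y))"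

definition trilinear_form :: "('k::field \<Rightarrow> 'c::ab_group_add \<Rightarrow> 'c) \<Rightarrow> ('c \<Rightarrow> 'c \<Rightarrow> 'c \<Rightarrow> 'k) \<Rightarrow> bool" where
  "trilinear_form sC t \<longleftrightarrow>
     (\<forall>y z. Vector_Spaces.linear sC (*) (\<lambda>x. t x y z)) \<and> (\<forall>x z. Vector_Spaces.linear sC (*) (\<lambda>y. t x y z))
     \<and> (\<forall>x y. Vector_Spaces.linear sC (*) (\<lambda>z. t x y z))"

definition multilinear_form :: "('k::field \<Rightarrow> 'c::ab_group_add \<Rightarrow> 'c) \<Rightarrow> nat \<Rightarrow> ('c list \<Rightarrow> 'k) \<Rightarrow> bool" where
  "multilinear_form sC n phi \<longleftrightarrow>
     (\<forall>xs i. length xs = n \<and> i < n \<longrightarrow> Vector_Spaces.linear sC (*) (\<lambda>x. phi (xs[i := x])))"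

definition sw :: "('c \<Rightarrow> 'c \<Rightarrow> 'v::comm_monoid_add) \<Rightarrow> ('c \<times> 'c) list \<Rightarrow> 'v" where
  "sw b t = sum_list (map (\<lambda>(x, y). b x y) t)"

definition coalgebra ::
  "('k::field \<Rightarrow> 'c::ab_group_add \<Rightarrow> 'c) \<Rightarrow> ('c \<Rightarrow> ('c \<times> 'c) list) \<Rightarrow> ('c \<Rightarrow> 'k) \<Rightarrow> bool" where
  "coalgebra sC mu eps \<longleftrightarrow>
     vector_space sC \<and> Vector_Spaces.linear sC (*) eps \<and>
     (\<forall>b. bilinear_form sC b \<longrightarrow> Vector_Spaces.linear sC (*) (\<lambda>c. sw b (mu c))) \<and>
     (\<forall>t c. trilinear_form sC t \<longrightarrow>
        sw (\<lambda>a b. sw (\<lambda>x y. t x y b) (mu a)) (mu c)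
      = sw (\<lambda>a b. sw (\<lambda>x y. t a x y) (mu b)) (mu c)) \<and>
     (\<forall>c. sw (\<lambda>a b. sC (eps a) b) (mu c) = c) \<and>
     (\<forall>c. sw (\<lambda>a b. sC (eps b) a) (mu c) = c)"

text \<open>A coaugmentation gamma : k -> C is a coalgebra morphism; it is determined by
g = gamma(1), which must be grouplike: mu(g) = g (x) g and eps(g) = 1.\<close>
definition coaugmentation ::
  "('k::field \<Rightarrow> 'c::ab_group_add \<Rightarrow> 'c) \<Rightarrow> ('c \<Rightarrow> ('c \<times> 'c) list) \<Rightarrow> ('c \<Rightarrow> 'k) \<Rightarrow> 'c \<Rightarrow> bool" where
  "coaugmentation sC mu eps g \<longleftrightarrow>
     eps g = 1 \<and> (\<forall>b. bilinear_form sC b \<longrightarrow> sw b (mu g) = b g g)"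

fun iter_comult :: "('c \<Rightarrow> ('c \<times> 'c) list) \<Rightarrow> nat \<Rightarrow> 'c \<Rightarrow> 'c list list" where
  "iter_comult mu 0 c = [[c]]"
| "iter_comult mu (Suc m) c =
     concat (map (\<lambda>(a, b). map (\<lambda>l. a # l) (iter_comult mu m b)) (mu c))"

text \<open>The image of x + gamma(k) in C_+ is annihilated by the m-fold iterated
(induced) comultiplication C_+ -> C_+^{(x) m+1}: the image of the iterated
comultiplication of x in C_+^{(x) m+1} is zero, i.e. every (m+1)-linear form on C
vanishing as soon as one argument lies in gamma(k) = k g vanishes on it.\<close>
definition plus_annihilated ::
  "('k::field \<Rightarrow> 'c::ab_group_add \<Rightarrow> 'c) \<Rightarrow> ('c \<Rightarrow> ('c \<times> 'c) list) \<Rightarrow> 'c \<Rightarrow> nat \<Rightarrow> 'c \<Rightarrow> bool" where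
  "plus_annihilated sC mu g m x \<longleftrightarrow>
     (\<forall>phi. multilinear_form sC (Suc m) phi \<and>
        (\<forall>xs i t. length xs = Suc m \<and> i < Suc m \<and> xs ! i = sC t g \<longrightarrow> phi xs = 0)
      \<longrightarrow> sum_list (map phi (iter_comult mu m x)) = 0)"

definition conilpotent_wrt ::
  "('k::field \<Rightarrow> 'c::ab_group_add \<Rightarrow> 'c) \<Rightarrow> ('c \<Rightarrow> ('c \<times> 'c) list) \<Rightarrow> ('c \<Rightarrow> 'k) \<Rightarrow> 'c \<Rightarrow> bool" where
  "conilpotent_wrt sC mu eps g \<longleftrightarrow>
     coaugmentation sC mu eps g \<and> (\<forall>x. \<exists>m. plus_annihilated sC mu g m x)"

text \<open>H^1(C) = ker(C_+ -> C_+ (x) C_+) is finite-dimensional: it is spanned by the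
images in C_+ = C / k g of finitely many elements.\<close>
definition H1_finite_dim ::
  "('k::field \<Rightarrow> 'c::ab_group_add \<Rightarrow> 'c) \<Rightarrow> ('c \<Rightarrow> ('c \<times> 'c) list) \<Rightarrow> 'c \<Rightarrow> bool" where
  "H1_finite_dim sC mu g \<longleftrightarrow>
     (\<exists>S. finite S \<and> (\<forall>x. plus_annihilated sC mu g 1 x \<longrightarrow> x \<in> module.span sC (insert g S)))"

text \<open>Left C-contramodule (P, pi).  pi : Hom_k(C,P) -> P is k-linear; an element
g of Hom_k(C, Hom_k(C,P)) is a function g with g v linear for each v and
v |-> g v linear; under Hom(V,Hom(U,W)) = Hom(U (x) V, W) it corresponds to
u (x) v |-> g v u, so the map induced by mu sends g to c |-> sum g c_(2) c_(1).\<close>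
definition contramodule ::
  "('k::field \<Rightarrow> 'c::ab_group_add \<Rightarrow> 'c) \<Rightarrow> ('c \<Rightarrow> ('c \<times> 'c) list) \<Rightarrow> ('c \<Rightarrow> 'k)
   \<Rightarrow> ('k \<Rightarrow> 'p::ab_group_add \<Rightarrow> 'p) \<Rightarrow> (('c \<Rightarrow> 'p) \<Rightarrow> 'p) \<Rightarrow> bool" where
  "contramodule sC mu eps sP pi \<longleftrightarrow>
     vector_space sP \<and>
     (\<forall>h1 h2. Vector_Spaces.linear sC sP h1 \<and> Vector_Spaces.linear sC sP h2 \<longrightarrow> pi (\<lambda>c. h1 c + h2 c) = pi h1 + pi h2) \<and>
     (\<forall>h a. Vector_Spaces.linear sC sP h \<longrightarrow> pi (\<lambda>c. sP a (h c)) = sP a (pi h)) \<and>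
     (\<forall>gg. (\<forall>v. Vector_Spaces.linear sC sP (gg v)) \<and> (\<forall>u. Vector_Spaces.linear sC sP (\<lambda>v. gg v u)) \<longrightarrow>
        pi (\<lambda>c. sw (\<lambda>a b. gg b a) (mu c)) = pi (\<lambda>c. pi (gg c))) \<and>
     (\<forall>p. pi (\<lambda>c. sP (eps c) p) = p)"

definition contra_hom ::
  "('k::field \<Rightarrow> 'c::ab_group_add \<Rightarrow> 'c) \<Rightarrow> ('k \<Rightarrow> 'p::ab_group_add \<Rightarrow> 'p) \<Rightarrow> (('c \<Rightarrow> 'p) \<Rightarrow> 'p)
   \<Rightarrow> ('k \<Rightarrow> 'q::ab_group_add \<Rightarrow> 'q) \<Rightarrow> (('c \<Rightarrow> 'q) \<Rightarrow> 'q) \<Rightarrow> ('p \<Rightarrow> 'q) \<Rightarrow> bool" where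
  "contra_hom sC sP piP sQ piQ f \<longleftrightarrow>
     Vector_Spaces.linear sP sQ f \<and> (\<forall>h. Vector_Spaces.linear sC sP h \<longrightarrow> f (piP h) = piQ (f \<circ> h))"

text \<open>The dual algebra C^vee: linear functionals, (phi psi)(c) = sum psi(c_(1)) phi(c_(2)).\<close>
definition dual :: "('k::field \<Rightarrow> 'c::ab_group_add \<Rightarrow> 'c) \<Rightarrow> ('c \<Rightarrow> 'k) set" where
  "dual sC = {phi. Vector_Spaces.linear sC (*) phi}"

definition dual_mult :: "('c \<Rightarrow> ('c \<times> 'c) list) \<Rightarrow> ('c \<Rightarrow> 'k::field) \<Rightarrow> ('c \<Rightarrow> 'k) \<Rightarrow> 'c \<Rightarrow> 'k" where
  "dual_mult mu phi psi = (\<lambda>c. sw (\<lambda>a b. psi a * phi b) (mu c))"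

definition contra_act :: "('k \<Rightarrow> 'p \<Rightarrow> 'p) \<Rightarrow> (('c \<Rightarrow> 'p) \<Rightarrow> 'p) \<Rightarrow> ('c \<Rightarrow> 'k) \<Rightarrow> 'p \<Rightarrow> 'p" where
  "contra_act sP pi phi p = pi (\<lambda>c. sP (phi c) p)"

text \<open>Dense subring R of C^vee (unit of C^vee is eps); the topology has the
annihilators of finite-dimensional subspaces span B (B finite) as a base of
neighbourhoods of zero.\<close>
definition dense_subring ::
  "('k::field \<Rightarrow> 'c::ab_group_add \<Rightarrow> 'c) \<Rightarrow> ('c \<Rightarrow> ('c \<times> 'c) list) \<Rightarrow> ('c \<Rightarrow> 'k) \<Rightarrow> ('c \<Rightarrow> 'k) set \<Rightarrow> bool" where
  "dense_subring sC mu eps R \<longleftrightarrow>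
     R \<subseteq> dual sC \<and> eps \<in> R \<and>
     (\<forall>r\<in>R. \<forall>s\<in>R. (\<lambda>c. r c - s c) \<in> R \<and> dual_mult mu r s \<in> R) \<and>
     (\<forall>phi\<in>dual sC. \<forall>B. finite B \<longrightarrow>
        (\<exists>r\<in>R. \<forall>x\<in>module.span sC B. r x = phi x))"

definition R_module_hom ::
  "('c \<Rightarrow> 'k) set \<Rightarrow> ('k \<Rightarrow> 'p::ab_group_add \<Rightarrow> 'p) \<Rightarrow> (('c \<Rightarrow> 'p) \<Rightarrow> 'p)
   \<Rightarrow> ('k \<Rightarrow> 'q::ab_group_add \<Rightarrow> 'q) \<Rightarrow> (('c \<Rightarrow> 'q) \<Rightarrow> 'q) \<Rightarrow> ('p \<Rightarrow> 'q) \<Rightarrow> bool" where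
  "R_module_hom R sP piP sQ piQ f \<longleftrightarrow>
     (\<forall>p p'. f (p + p') = f p + f p') \<and>
     (\<forall>r\<in>R. \<forall>p. f (contra_act sP piP r p) = contra_act sQ piQ r (f p))"

end

theory Submission
  imports Defs "HOL-Library.Function_Algebras"
begin

lemma vs_field: "vector_space ((*) :: 'k::field \<Rightarrow> 'k \<Rightarrow> 'k)"
  by unfold_locales (auto simp: algebra_simps)

lemma sw_Nil[simp]: "sw b [] = 0" by (simp add: sw_def)
lemma sw_Cons[simp]: "sw b (p # t) = b (fst p) (snd p) + sw b t"
  by (cases p) (simp add: sw_def)
lemma sw_append[simp]: "sw b (t @ u) = sw b t + sw b u" by (simp add: sw_def)
lemma sw_add: "sw (\<lambda>x y. b1 x y + b2 x y) t = sw b1 t + sw b2 t"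
  by (induct t) (auto simp: algebra_simps)
lemma sw_zero[simp]: "sw (\<lambda>x y. 0) t = 0" by (induct t) auto
lemma sw_diff: "sw (\<lambda>x y. (b1 x y::'a::ab_group_add) - b2 x y) t = sw b1 t - sw b2 t"
  by (induct t) (auto simp: algebra_simps)
lemma sw_sum: "sw (\<lambda>x y. \<Sum>i\<in>I. b i x y) t = (\<Sum>i\<in>I. sw (b i) t)"
  by (induct t) (auto simp: sum.distrib)
lemma sw_cong: "(\<And>x y. (x,y) \<in> set t \<Longrightarrow> b1 x y = b2 x y) \<Longrightarrow> sw b1 t = sw b2 t"
  by (induct t) auto
lemma sw_mult_left: "sw (\<lambda>x y. (c::'a::semiring_0) * b x y) t = c * sw b t"
  by (induct t) (auto simp: algebra_simps)
lemma sw_mult_right: "sw (\<lambda>x y. b x y * (c::'a::semiring_0)) t = sw b t * c"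
  by (induct t) (auto simp: algebra_simps)

lemma add_hom_0: fixes L :: "'a::monoid_add \<Rightarrow> 'b::ab_group_add"
  assumes "\<And>x y. L (x + y) = L x + L y" shows "L 0 = 0"
proof -
  have "L 0 = L (0 + 0)" by simp
  also have "\<dots> = L 0 + L 0" by (rule assms)
  finally show ?thesis by simp
qed

lemma sw_hom:
  fixes L :: "'a::comm_monoid_add \<Rightarrow> 'b::ab_group_add"
  assumes "\<And>x y. L (x + y) = L x + L y"
  shows "L (sw b t) = sw (\<lambda>x y. L (b x y)) t"
  by (induct t) (auto simp: assms add_hom_0[of L, OF assms])

lemma sum_list_hom:
  fixes L :: "'a::comm_monoid_add \<Rightarrow> 'b::ab_group_add"
  assumes "\<And>x y. L (x + y) = L x + L y"
  shows "L (sum_list (map f xs)) = sum_list (map (\<lambda>x. L (f x)) xs)"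
  by (induct xs) (auto simp: assms add_hom_0[of L, OF assms])

lemma lin_add: "Vector_Spaces.linear s1 s2 f \<Longrightarrow> f (x + y) = f x + f y"
  by (simp add: linear_iff)
lemma lin_scale: "Vector_Spaces.linear s1 s2 f \<Longrightarrow> f (s1 c x) = s2 c (f x)"
  by (simp add: linear_iff)
lemma lin_0: "Vector_Spaces.linear s1 s2 f \<Longrightarrow> f 0 = 0"
  using add_hom_0[of f] lin_add by metis
lemma lin_diff: "Vector_Spaces.linear s1 s2 f \<Longrightarrow> f (x - y) = f x - f y"
  by (metis lin_add diff_add_cancel eq_diff_eq)
lemma lin_neg: "Vector_Spaces.linear s1 s2 f \<Longrightarrow> f (- x) = - f x"
  by (metis lin_diff lin_0 diff_0)
lemma lin_sum: "Vector_Spaces.linear s1 s2 f \<Longrightarrow> f (\<Sum>i\<in>I. v i) = (\<Sum>i\<in>I. f (v i))"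
  by (induct I rule: infinite_finite_induct) (auto simp: lin_0 lin_add)
lemma lin_sw: "Vector_Spaces.linear s1 s2 f \<Longrightarrow> f (sw b t) = sw (\<lambda>x y. f (b x y)) t"
  by (rule sw_hom) (simp add: lin_add)
lemma lin_sum_list: "Vector_Spaces.linear s1 s2 f \<Longrightarrow> f (sum_list (map v xs)) = sum_list (map (\<lambda>x. f (v x)) xs)"
  by (rule sum_list_hom) (simp add: lin_add)
lemma lin_vs1: "Vector_Spaces.linear s1 s2 f \<Longrightarrow> vector_space s1"
  by (simp add: linear_iff)
lemma lin_vs2: "Vector_Spaces.linear s1 s2 f \<Longrightarrow> vector_space s2"
  by (simp add: linear_iff)

lemma linI:
  assumes "vector_space s1" "vector_space s2"
    "\<And>x y. f (x + y) = f x + f y" "\<And>c x. f (s1 c x) = s2 c (f x)"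
  shows "Vector_Spaces.linear s1 s2 f"
  using assms by (simp add: linear_iff)

lemma lin_comp: "Vector_Spaces.linear s1 s2 f \<Longrightarrow> Vector_Spaces.linear s2 s3 h \<Longrightarrow>
   Vector_Spaces.linear s1 s3 (\<lambda>x. h (f x))"
  using Vector_Spaces.linear_compose[of s1 s2 f s3 h] by (simp add: comp_def)

lemma vs_mod: "vector_space s \<Longrightarrow> module s" by (simp add: module_iff_vector_space)

lemma lin_add_fun: assumes "Vector_Spaces.linear s1 s2 f" "Vector_Spaces.linear s1 s2 h"
  shows "Vector_Spaces.linear s1 s2 (\<lambda>x. f x + h x)"
proof -
  interpret V: vector_space s2 using lin_vs2[OF assms(1)] .
  show ?thesis by (rule linI) (auto simp: lin_vs1[OF assms(1)] lin_vs2[OF assms(1)] lin_add[OF assms(1)]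
     lin_add[OF assms(2)] lin_scale[OF assms(1)] lin_scale[OF assms(2)] V.scale_right_distrib algebra_simps)
qed

lemma lin_diff_fun: assumes "Vector_Spaces.linear s1 s2 f" "Vector_Spaces.linear s1 s2 h"
  shows "Vector_Spaces.linear s1 s2 (\<lambda>x. f x - h x)"
proof -
  interpret V: vector_space s2 using lin_vs2[OF assms(1)] .
  show ?thesis by (rule linI) (auto simp: lin_vs1[OF assms(1)] lin_vs2[OF assms(1)] lin_add[OF assms(1)]
     lin_add[OF assms(2)] lin_scale[OF assms(1)] lin_scale[OF assms(2)] V.scale_right_diff_distrib algebra_simps)
qed

lemma lin_zero_fun: assumes "vector_space s1" "vector_space s2" shows "Vector_Spaces.linear s1 s2 (\<lambda>x. 0)"
proof -
  interpret V: vector_space s2 using assms(2) .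
  show ?thesis by (rule linI) (auto simp: assms)
qed

lemma lin_sum_fun: "vector_space s1 \<Longrightarrow> vector_space s2 \<Longrightarrow> (\<And>i. i \<in> I \<Longrightarrow> Vector_Spaces.linear s1 s2 (f i)) \<Longrightarrow>
   Vector_Spaces.linear s1 s2 (\<lambda>x. \<Sum>i\<in>I. f i x)"
proof (induct I rule: infinite_finite_induct)
  case (insert i I)
  then show ?case using lin_add_fun[of s1 s2 "f i" "\<lambda>x. \<Sum>i\<in>I. f i x"] by simp
qed (auto intro: lin_zero_fun)

lemma lin_sum_list_fun: "vector_space s1 \<Longrightarrow> vector_space s2 \<Longrightarrow> (\<And>l. l \<in> set L \<Longrightarrow> Vector_Spaces.linear s1 s2 (f l)) \<Longrightarrow>
   Vector_Spaces.linear s1 s2 (\<lambda>x. sum_list (map (\<lambda>l. f l x) L))"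
proof (induct L)
  case (Cons a L)
  then show ?case using lin_add_fun[of s1 s2 "f a" "\<lambda>x. sum_list (map (\<lambda>l. f l x) L)"] by simp
qed (auto intro: lin_zero_fun)

lemma lin_sw_fun: "vector_space s1 \<Longrightarrow> vector_space s2 \<Longrightarrow> (\<And>a b. (a,b) \<in> set t \<Longrightarrow> Vector_Spaces.linear s1 s2 (f a b)) \<Longrightarrow>
   Vector_Spaces.linear s1 s2 (\<lambda>x. sw (\<lambda>a b. f a b x) t)"
proof (induct t)
  case (Cons p t)
  then show ?case using lin_add_fun[of s1 s2 "f (fst p) (snd p)" "\<lambda>x. sw (\<lambda>a b. f a b x) t"]
    by (cases p) simp
qed (auto intro: lin_zero_fun)

lemma lin_scale_const: assumes "Vector_Spaces.linear s1 (*) f" "vector_space s2"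
  shows "Vector_Spaces.linear s1 s2 (\<lambda>x. s2 (f x) p)"
proof -
  interpret V: vector_space s2 using assms(2) .
  show ?thesis by (rule linI) (auto simp: lin_vs1[OF assms(1)] assms(2) lin_add[OF assms(1)] lin_scale[OF assms(1)]
    V.scale_left_distrib)
qed

lemma lin_scale_fun: assumes "Vector_Spaces.linear s1 s2 f" shows "Vector_Spaces.linear s1 s2 (\<lambda>x. s2 a (f x))"
proof -
  interpret V: vector_space s2 using lin_vs2[OF assms(1)] .
  show ?thesis by (rule linI) (auto simp: lin_vs1[OF assms(1)] lin_vs2[OF assms(1)] lin_add[OF assms(1)]
     lin_scale[OF assms(1)] V.scale_right_distrib mult.commute)
qed

lemma lin_mult_left: "Vector_Spaces.linear s1 (*) f \<Longrightarrow> Vector_Spaces.linear s1 (*) (\<lambda>x. a * f x)"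
  using lin_scale_fun[of s1 "(*)" f a] by simp
lemma lin_mult_right: "Vector_Spaces.linear s1 (*) f \<Longrightarrow> Vector_Spaces.linear s1 (*) (\<lambda>x. f x * a)"
  using lin_scale_fun[of s1 "(*)" f a] by (simp add: mult.commute)

lemma lin_id: "vector_space s \<Longrightarrow> Vector_Spaces.linear s s (\<lambda>x. x)"
  by (rule linI) auto

section \<open>Separation by linear functionals\<close>

lemma separate:
  fixes s :: "'k::field \<Rightarrow> 'v::ab_group_add \<Rightarrow> 'v"
  assumes vs: "vector_space s" and z: "z \<notin> module.span s U"
  shows "\<exists>F. Vector_Spaces.linear s (*) F \<and> (\<forall>u\<in>module.span s U. F u = 0) \<and> F z = 1"
proof -
  interpret V: vector_space s by fact
  interpret P: vector_space_pair s "(*)" using vs vs_field by (simp add: vector_space_pair_def)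
  obtain B where B: "B \<subseteq> U" "V.independent B" "U \<subseteq> V.span B"
    using V.maximal_independent_subset[of U] by blast
  have spB: "V.span B = V.span U"
    using B V.span_mono V.span_minimal by (metis V.span_span subset_antisym)
  have zB: "z \<notin> V.span B" using z spB by simp
  have ind: "V.independent (insert z B)" using V.independent_insertI[OF zB B(2)] .
  obtain F where F: "Vector_Spaces.linear s (*) F" "\<forall>x\<in>insert z B. F x = (if x = z then 1 else 0)"
    using P.linear_independent_extend[OF ind, of "\<lambda>x. if x = z then 1 else 0"] by blast
  have zB': "z \<notin> B" using zB V.span_base by blast
  have "\<forall>u\<in>V.span B. F u = 0"
  proof
    fix u assume u: "u \<in> V.span B"
    have "F u = (\<lambda>x. 0) u"
      by (rule P.linear_eq_on[OF F(1) _ u]) (auto intro: lin_zero_fun vs vs_field simp: F(2) zB')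
    then show "F u = 0" by simp
  qed
  then show ?thesis using F spB by auto
qed

lemma separate_point:
  fixes s :: "'k::field \<Rightarrow> 'v::ab_group_add \<Rightarrow> 'v"
  assumes vs: "vector_space s" and z: "z \<noteq> 0"
  shows "\<exists>F. Vector_Spaces.linear s (*) F \<and> F z = 1"
proof -
  have "z \<notin> module.span s {}" using z by (simp add: module.span_empty vs[unfolded module_iff_vector_space[symmetric]])
  then show ?thesis using separate[OF vs] by blast
qed

lemma linear_by_functionals:
  fixes s1 :: "'k::field \<Rightarrow> 'a::ab_group_add \<Rightarrow> 'a" and s2 :: "'k \<Rightarrow> 'b::ab_group_add \<Rightarrow> 'b"
  assumes vs1: "vector_space s1" and vs2: "vector_space s2"
    and H: "\<And>F. Vector_Spaces.linear s2 (*) F \<Longrightarrow> Vector_Spaces.linear s1 (*) (\<lambda>x. F (G x))"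
  shows "Vector_Spaces.linear s1 s2 G"
proof (rule linI[OF vs1 vs2])
  fix x y
  show "G (x + y) = G x + G y"
  proof (rule ccontr)
    assume "G (x + y) \<noteq> G x + G y"
    then have "G (x + y) - (G x + G y) \<noteq> 0" by simp
    then obtain F where F: "Vector_Spaces.linear s2 (*) F" "F (G (x + y) - (G x + G y)) = 1"
      using separate_point[OF vs2] by blast
    have "F (G (x + y)) = F (G x) + F (G y)" using H[OF F(1)] lin_add by blast
    then show False using F by (simp add: lin_diff lin_add)
  qed
next
  fix c x
  show "G (s1 c x) = s2 c (G x)"
  proof (rule ccontr)
    assume "G (s1 c x) \<noteq> s2 c (G x)"
    then have "G (s1 c x) - s2 c (G x) \<noteq> 0" by simp
    then obtain F where F: "Vector_Spaces.linear s2 (*) F" "F (G (s1 c x) - s2 c (G x)) = 1"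
      using separate_point[OF vs2] by blast
    have "F (G (s1 c x)) = c * F (G x)" using H[OF F(1)] lin_scale by fastforce
    then show False using F by (simp add: lin_diff lin_scale)
  qed
qed


definition VAN :: "('k::field \<Rightarrow> 'c::ab_group_add \<Rightarrow> 'c) \<Rightarrow> 'c \<Rightarrow> nat \<Rightarrow> ('c list \<Rightarrow> 'k) \<Rightarrow> bool" where
  "VAN sC g n phi \<longleftrightarrow> (\<forall>xs i t. length xs = n \<and> i < n \<and> xs ! i = sC t g \<longrightarrow> phi xs = 0)"

definition SI :: "('c \<Rightarrow> ('c \<times> 'c) list) \<Rightarrow> nat \<Rightarrow> 'c \<Rightarrow> ('c list \<Rightarrow> 'k::comm_monoid_add) \<Rightarrow> 'k" where
  "SI mu m c phi = sum_list (map phi (iter_comult mu m c))"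

lemma pa_alt: "plus_annihilated sC mu g m x \<longleftrightarrow>
  (\<forall>phi. multilinear_form sC (Suc m) phi \<and> VAN sC g (Suc m) phi \<longrightarrow> SI mu m x phi = 0)"
  unfolding plus_annihilated_def VAN_def SI_def by blast

lemma MF_iff:
  fixes sC :: "'k::field \<Rightarrow> 'c::ab_group_add \<Rightarrow> 'c" and phi :: "'c list \<Rightarrow> 'k"
  shows "multilinear_form sC n phi \<longleftrightarrow>
   (\<forall>pre post. length pre + length post + 1 = n \<longrightarrow> Vector_Spaces.linear sC (*) (\<lambda>x. phi (pre @ x # post)))"
proof
  assume H: "multilinear_form sC n phi"
  show "\<forall>pre post. length pre + length post + 1 = n \<longrightarrow> Vector_Spaces.linear sC (*) (\<lambda>x. phi (pre @ x # post))"
  proof (intro allI impI)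
    fix pre post :: "'c list" assume L: "length pre + length post + 1 = n"
    have "\<And>x. (pre @ x # post) = (pre @ undefined # post)[length pre := x]" by simp
    moreover have "length (pre @ undefined # post) = n \<and> length pre < n" using L by simp
    then have "Vector_Spaces.linear sC (*) (\<lambda>x. phi ((pre @ undefined # post)[length pre := x]))"
      using H unfolding multilinear_form_def by blast
    ultimately show "Vector_Spaces.linear sC (*) (\<lambda>x. phi (pre @ x # post))" by simp
  qed
next
  assume H: "\<forall>pre post. length pre + length post + 1 = n \<longrightarrow> Vector_Spaces.linear sC (*) (\<lambda>x. phi (pre @ x # post))"
  show "multilinear_form sC n phi" unfolding multilinear_form_def
  proof (intro allI impI)
    fix xs :: "'c list" and i assume A: "length xs = n \<and> i < n"
    have "\<And>x. xs[i := x] = take i xs @ x # drop (Suc i) xs" using A by (simp add: upd_conv_take_nth_drop)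
    moreover have "length (take i xs) + length (drop (Suc i) xs) + 1 = n" using A by simp
    ultimately show "Vector_Spaces.linear sC (*) (\<lambda>x. phi (xs[i := x]))" using H by simp
  qed
qed

lemma VAN_iff:
  fixes sC :: "'k::field \<Rightarrow> 'c::ab_group_add \<Rightarrow> 'c" and phi :: "'c list \<Rightarrow> 'k"
  shows "VAN sC g n phi \<longleftrightarrow>
   (\<forall>pre post t. length pre + length post + 1 = n \<longrightarrow> phi (pre @ sC t g # post) = 0)"
proof
  assume H: "VAN sC g n phi"
  show "\<forall>pre post t. length pre + length post + 1 = n \<longrightarrow> phi (pre @ sC t g # post) = 0"
  proof (intro allI impI)
    fix pre post :: "'c list" and t assume "length pre + length post + 1 = n"
    then have "length (pre @ sC t g # post) = n \<and> length pre < n \<and> (pre @ sC t g # post) ! length pre = sC t g" by simp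
    then show "phi (pre @ sC t g # post) = 0" using H unfolding VAN_def by blast
  qed
next
  assume H: "\<forall>pre post t. length pre + length post + 1 = n \<longrightarrow> phi (pre @ sC t g # post) = 0"
  show "VAN sC g n phi" unfolding VAN_def
  proof (intro allI impI)
    fix xs :: "'c list" and i t assume A: "length xs = n \<and> i < n \<and> xs ! i = sC t g"
    have "xs = take i xs @ sC t g # drop (Suc i) xs" using A id_take_nth_drop[of i xs] by simp
    moreover have "length (take i xs) + length (drop (Suc i) xs) + 1 = n" using A by simp
    ultimately show "phi xs = 0" using H A by metis
  qed
qed

lemma iter_len: "l \<in> set (iter_comult mu m c) \<Longrightarrow> length l = Suc m"
  by (induct m arbitrary: c l) auto

lemma iter_ne: "l \<in> set (iter_comult mu m c) \<Longrightarrow> l \<noteq> []"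
  using iter_len by fastforce

lemma SI_0[simp]: "SI mu 0 c phi = phi [c]"
  by (simp add: SI_def)

lemma SI_Suc_aux: "sum_list (map phi (concat (map (\<lambda>(a, b). map (\<lambda>l. a # l) (iter_comult mu m b)) t)))
   = sw (\<lambda>a b. SI mu m b (\<lambda>l. phi (a # l))) t"
  by (induct t) (auto simp: SI_def comp_def)

lemma SI_Suc: "SI mu (Suc m) c phi = sw (\<lambda>a b. SI mu m b (\<lambda>l. phi (a # l))) (mu c)"
  using SI_Suc_aux[of phi mu m "mu c"] by (simp add: SI_def)

lemma SI_cong: "(\<And>l. l \<in> set (iter_comult mu m c) \<Longrightarrow> phi l = psi l) \<Longrightarrow> SI mu m c phi = SI mu m c psi"
  unfolding SI_def by (metis map_eq_conv)

lemma SI_mult: "SI mu m c (\<lambda>l. (k::'k::semiring_0) * phi l) = k * SI mu m c phi"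
  by (simp add: SI_def sum_list_const_mult)

lemma SI_add: "SI mu m c (\<lambda>l. phi l + psi l) = SI mu m c phi + SI mu m c psi"
  by (simp add: SI_def sum_list_addf)

lemma SI_diff: "SI mu m c (\<lambda>l. (phi l::'k::ab_group_add) - psi l) = SI mu m c phi - SI mu m c psi"
  by (simp add: SI_def sum_list_subtractf)

lemma SI_sum: "SI mu m c (\<lambda>l. \<Sum>i\<in>I. phi i l) = (\<Sum>i\<in>I. SI mu m c (phi i))"
  unfolding SI_def by (induct I rule: infinite_finite_induct) (auto simp: sum_list_addf)

lemma SI_zero[simp]: "SI mu m c (\<lambda>l. 0) = 0"
  by (simp add: SI_def)

lemma SI_expand_last:
  "SI mu (Suc m) c phi = SI mu m c (\<lambda>l. sw (\<lambda>a b. phi (butlast l @ [a, b])) (mu (last l)))"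
proof (induct m arbitrary: c phi)
  case 0
  then show ?case by (simp add: SI_Suc)
next
  case (Suc m)
  have "SI mu (Suc (Suc m)) c phi = sw (\<lambda>a b. SI mu (Suc m) b (\<lambda>l. phi (a # l))) (mu c)"
    by (rule SI_Suc)
  also have "\<dots> = sw (\<lambda>a b. SI mu m b (\<lambda>l. sw (\<lambda>a' b'. phi (a # (butlast l @ [a', b']))) (mu (last l)))) (mu c)"
    using Suc by simp
  also have "\<dots> = sw (\<lambda>a b. SI mu m b (\<lambda>l. sw (\<lambda>a' b'. phi (butlast (a # l) @ [a', b'])) (mu (last (a # l))))) (mu c)"
  proof (rule sw_cong, rule SI_cong)
    fix a b l assume "l \<in> set (iter_comult mu m b)"
    then have "l \<noteq> []" by (rule iter_ne)
    then show "sw (\<lambda>a' b'. phi (a # (butlast l @ [a', b']))) (mu (last l)) =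
      sw (\<lambda>a' b'. phi (butlast (a # l) @ [a', b'])) (mu (last (a # l)))" by simp
  qed
  also have "\<dots> = SI mu (Suc m) c (\<lambda>l. sw (\<lambda>a b. phi (butlast l @ [a, b])) (mu (last l)))"
    by (rule SI_Suc[symmetric])
  finally show ?case .
qed

locale coalg =
  fixes sC :: "'k::field \<Rightarrow> 'c::ab_group_add \<Rightarrow> 'c" and mu :: "'c \<Rightarrow> ('c \<times> 'c) list" and eps :: "'c \<Rightarrow> 'k"
  assumes coalg: "coalgebra sC mu eps"
begin

abbreviation lin :: "('c \<Rightarrow> 'k) \<Rightarrow> bool" where "lin f \<equiv> Vector_Spaces.linear sC (*) f"

lemma vsC: "vector_space sC" using coalg by (simp add: coalgebra_def)

sublocale C: vector_space sC by (rule vsC)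

lemma eps_lin: "lin eps" using coalg by (simp add: coalgebra_def)
lemma mu_bil: "bilinear_form sC b \<Longrightarrow> lin (\<lambda>c. sw b (mu c))" using coalg by (simp add: coalgebra_def)
lemma coassoc: "trilinear_form sC t \<Longrightarrow>
   sw (\<lambda>a b. sw (\<lambda>x y. t x y b) (mu a)) (mu c) = sw (\<lambda>a b. sw (\<lambda>x y. t a x y) (mu b)) (mu c)"
  using coalg by (simp add: coalgebra_def)
lemma counit_l: "sw (\<lambda>a b. sC (eps a) b) (mu c) = c" using coalg by (simp add: coalgebra_def)
lemma counit_r: "sw (\<lambda>a b. sC (eps b) a) (mu c) = c" using coalg by (simp add: coalgebra_def)

lemma mu_bil2: "(\<And>y. lin (\<lambda>x. b x y)) \<Longrightarrow> (\<And>x. lin (\<lambda>y. b x y)) \<Longrightarrow> lin (\<lambda>c. sw b (mu c))"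
  by (rule mu_bil) (simp add: bilinear_form_def)

lemma counit_fun_r: "Vector_Spaces.linear sC s h \<Longrightarrow> sw (\<lambda>a b. s (eps b) (h a)) (mu c) = h c"
  using lin_sw[of sC s h "\<lambda>a b. sC (eps b) a" "mu c"] counit_r[of c] by (simp add: lin_scale)

lemma counit_fun_l: "Vector_Spaces.linear sC s h \<Longrightarrow> sw (\<lambda>a b. s (eps a) (h b)) (mu c) = h c"
  using lin_sw[of sC s h "\<lambda>a b. sC (eps a) b" "mu c"] counit_l[of c] by (simp add: lin_scale)

lemma counit_fn_r: "lin z \<Longrightarrow> sw (\<lambda>a b. z a * eps b) (mu c) = z c"
  using counit_fun_r[of "(*)" z c] by (simp add: mult.commute)

lemma counit_fn_l: "lin z \<Longrightarrow> sw (\<lambda>a b. eps a * z b) (mu c) = z c"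
  using counit_fun_l[of "(*)" z c] by simp

lemma mu_lin_V:
  assumes vs: "vector_space sV"
    and B1: "\<And>y. Vector_Spaces.linear sC sV (\<lambda>x. B x y)" and B2: "\<And>x. Vector_Spaces.linear sC sV (\<lambda>y. B x y)"
  shows "Vector_Spaces.linear sC sV (\<lambda>c. sw B (mu c))"
proof (rule linear_by_functionals[OF vsC vs])
  fix F assume F: "Vector_Spaces.linear sV (*) F"
  have "lin (\<lambda>c. sw (\<lambda>a b. F (B a b)) (mu c))"
    by (rule mu_bil2) (auto intro: lin_comp[OF B1 F] lin_comp[OF B2 F])
  then show "lin (\<lambda>x. F (sw B (mu x)))" by (simp add: lin_sw[OF F])
qed

lemma MF_0[simp]: "multilinear_form sC 0 phi" by (simp add: multilinear_form_def)

lemma SI_lin: "multilinear_form sC (Suc m) phi \<Longrightarrow> lin (\<lambda>c. SI mu m c phi)"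
proof (induct m arbitrary: phi)
  case 0
  then show ?case using MF_iff[of sC 1 phi] by (auto dest: spec[of _ "[]"])
next
  case (Suc m)
  have M: "\<forall>pre post. length pre + length post + 1 = Suc (Suc m) \<longrightarrow> lin (\<lambda>x. phi (pre @ x # post))"
    using Suc.prems MF_iff by blast
  show ?case unfolding SI_Suc
  proof (rule mu_bil2)
    fix y show "lin (\<lambda>x. SI mu m y (\<lambda>l. phi (x # l)))"
      unfolding SI_def
    proof (rule lin_sum_list_fun[OF vsC vs_field])
      fix l assume "l \<in> set (iter_comult mu m y)"
      then have "length l = Suc m" by (rule iter_len)
      then show "lin (\<lambda>x. phi (x # l))" using M[rule_format, of "[]" l] by simp
    qed
  next
    fix x
    have "multilinear_form sC (Suc m) (\<lambda>l. phi (x # l))"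
      unfolding MF_iff
    proof (intro allI impI)
      fix pre post :: "'c list" assume "length pre + length post + 1 = Suc m"
      then show "lin (\<lambda>y. phi (x # pre @ y # post))" using M[rule_format, of "x # pre" post] by simp
    qed
    then show "lin (\<lambda>y. SI mu m y (\<lambda>l. phi (x # l)))" by (rule Suc.hyps)
  qed
qed

end

locale coaug = coalg sC mu eps for sC :: "'k::field \<Rightarrow> 'c::ab_group_add \<Rightarrow> 'c" and mu eps +
  fixes g :: 'c
  assumes coaug: "coaugmentation sC mu eps g"
begin

lemma eps_g: "eps g = 1" using coaug by (simp add: coaugmentation_def)
lemma mu_g: "bilinear_form sC b \<Longrightarrow> sw b (mu g) = b g g" using coaug by (simp add: coaugmentation_def)
lemma mu_g2: "(\<And>y. lin (\<lambda>x. b x y)) \<Longrightarrow> (\<And>x. lin (\<lambda>y. b x y)) \<Longrightarrow> sw b (mu g) = b g g"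
  by (rule mu_g) (simp add: bilinear_form_def)

lemma pa_mono1: assumes "plus_annihilated sC mu g n c" shows "plus_annihilated sC mu g (Suc n) c"
  unfolding pa_alt
proof (intro allI impI)
  fix phi assume A: "multilinear_form sC (Suc (Suc n)) phi \<and> VAN sC g (Suc (Suc n)) phi"
  have M: "\<And>pre post. length pre + length post + 1 = Suc (Suc n) \<Longrightarrow> lin (\<lambda>x. phi (pre @ x # post))"
    using A MF_iff by blast
  have V: "\<And>pre post t. length pre + length post + 1 = Suc (Suc n) \<Longrightarrow> phi (pre @ sC t g # post) = 0"
    using A VAN_iff by blast
  define phi' where "phi' = (\<lambda>l :: 'c list. sw (\<lambda>a b. phi (butlast l @ [a, b])) (mu (last l)))"
  have "multilinear_form sC (Suc n) phi'"
    unfolding MF_iff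
  proof (intro allI impI)
    fix pre post :: "'c list" assume L: "length pre + length post + 1 = Suc n"
    show "lin (\<lambda>x. phi' (pre @ x # post))"
    proof (cases post rule: rev_cases)
      case Nil
      then have "phi' (pre @ x # post) = sw (\<lambda>a b. phi (pre @ [a, b])) (mu x)" for x
        by (simp add: phi'_def)
      moreover have "lin (\<lambda>x. sw (\<lambda>a b. phi (pre @ [a, b])) (mu x))"
      proof (rule mu_bil2)
        fix y show "lin (\<lambda>x. phi (pre @ [x, y]))" using M[of pre "[y]"] L Nil by simp
      next
        fix x show "lin (\<lambda>y. phi (pre @ [x, y]))" using M[of "pre @ [x]" "[]"] L Nil by simp
      qed
      ultimately show ?thesis by simp
    next
      case (snoc ys y)
      then have "phi' (pre @ x # post) = sw (\<lambda>a b. phi (pre @ x # ys @ [a, b])) (mu y)" for x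
        by (simp add: phi'_def butlast_append)
      moreover have "lin (\<lambda>x. sw (\<lambda>a b. phi (pre @ x # ys @ [a, b])) (mu y))"
      proof (rule lin_sw_fun[OF vsC vs_field])
        fix a b show "lin (\<lambda>x. phi (pre @ x # ys @ [a, b]))" using M[of pre "ys @ [a, b]"] L snoc by simp
      qed
      ultimately show ?thesis by simp
    qed
  qed
  moreover have "VAN sC g (Suc n) phi'"
    unfolding VAN_iff
  proof (intro allI impI)
    fix pre post :: "'c list" and t assume L: "length pre + length post + 1 = Suc n"
    show "phi' (pre @ sC t g # post) = 0"
    proof (cases post rule: rev_cases)
      case Nil
      have bil1: "lin (\<lambda>x. phi (pre @ [x, y]))" for y using M[of pre "[y]"] L Nil by simp
      have bil2: "lin (\<lambda>y. phi (pre @ [x, y]))" for x using M[of "pre @ [x]" "[]"] L Nil by simp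
      have "phi' (pre @ sC t g # post) = sw (\<lambda>a b. phi (pre @ [a, b])) (mu (sC t g))"
        using Nil by (simp add: phi'_def)
      also have "\<dots> = t * sw (\<lambda>a b. phi (pre @ [a, b])) (mu g)"
        using lin_scale[OF mu_bil2[OF bil1 bil2]] by simp
      also have "\<dots> = t * phi (pre @ [g, g])" using mu_g2[OF bil1 bil2] by simp
      also have "phi (pre @ [g, g]) = phi (pre @ sC 1 g # [g])" by simp
      also have "\<dots> = 0" using V[of pre "[g]" 1] L Nil by simp
      finally show ?thesis by simp
    next
      case (snoc ys y)
      then have "phi' (pre @ sC t g # post) = sw (\<lambda>a b. phi (pre @ sC t g # ys @ [a, b])) (mu y)"
        by (simp add: phi'_def butlast_append)
      also have "\<dots> = sw (\<lambda>a b. 0) (mu y)"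
      proof (rule sw_cong)
        fix a b show "phi (pre @ sC t g # ys @ [a, b]) = 0" using V[of pre "ys @ [a, b]" t] L snoc by simp
      qed
      finally show ?thesis by simp
    qed
  qed
  ultimately have "SI mu n c phi' = 0" using assms unfolding pa_alt by blast
  then show "SI mu (Suc n) c phi = 0" by (simp add: SI_expand_last phi'_def)
qed

lemma pa_mono: "plus_annihilated sC mu g n c \<Longrightarrow> n \<le> m \<Longrightarrow> plus_annihilated sC mu g m c"
  by (induct m) (auto simp: le_Suc_eq intro: pa_mono1)

end


fun prodL :: "('c \<Rightarrow> ('c \<times> 'c) list) \<Rightarrow> ('c \<Rightarrow> 'k::comm_ring_1) \<Rightarrow> ('c \<Rightarrow> 'k) list \<Rightarrow> 'c \<Rightarrow> 'k" where
  "prodL mu eps [] = eps"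
| "prodL mu eps (z # zs) = (\<lambda>c. sw (\<lambda>a b. z a * prodL mu eps zs b) (mu c))"

fun pf :: "('c \<Rightarrow> 'k::comm_ring_1) list \<Rightarrow> 'c list \<Rightarrow> 'k" where
  "pf [] l = 1"
| "pf (z # zs) l = z (hd l) * pf zs (tl l)"

context coalg
begin

lemma prodL_lin: "(\<forall>z\<in>set zs. lin z) \<Longrightarrow> lin (prodL mu eps zs)"
proof (induct zs)
  case Nil
  then show ?case using eps_lin by simp
next
  case (Cons z zs)
  then have "lin z" "lin (prodL mu eps zs)" by auto
  then show ?case by (simp, intro mu_bil2) (auto intro: lin_mult_right lin_mult_left)
qed

lemma pf_ML: "(\<forall>z\<in>set zs. lin z) \<Longrightarrow> multilinear_form sC (length zs) (pf zs)"
proof -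
  assume A: "\<forall>z\<in>set zs. lin z"
  have "\<forall>pre post. length pre + length post + 1 = length zs \<longrightarrow> lin (\<lambda>x. pf zs (pre @ x # post))"
    using A
  proof (induct zs)
    case Nil
    then show ?case by simp
  next
    case (Cons z zs)
    show ?case
    proof (intro allI impI)
      fix pre post :: "'c list" assume L: "length pre + length post + 1 = length (z # zs)"
      show "lin (\<lambda>x. pf (z # zs) (pre @ x # post))"
      proof (cases pre)
        case Nil
        then show ?thesis using Cons.prems by (simp add: lin_mult_right)
      next
        case (Cons p pre')
        then show ?thesis using Cons.hyps[rule_format, of pre' post] \<open>\<forall>z\<in>set (z # zs). lin z\<close> L
          by (simp add: lin_mult_left)
      qed
    qed
  qed
  then show ?thesis by (simp add: MF_iff)
qed

lemma prodL_SI: "zs \<noteq> [] \<Longrightarrow> (\<forall>z\<in>set zs. lin z) \<Longrightarrow> prodL mu eps zs c = SI mu (length zs - 1) c (pf zs)"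
proof (induct zs arbitrary: c)
  case Nil
  then show ?case by simp
next
  case (Cons z zs)
  show ?case
  proof (cases zs)
    case Nil
    then show ?thesis using counit_fn_r[of z c] Cons.prems by simp
  next
    case (Cons z' zs')
    then obtain m where m: "length zs = Suc m" by simp
    have ne: "zs \<noteq> []" using Cons by simp
    have IH: "prodL mu eps zs b = SI mu m b (pf zs)" for b
      using Cons.hyps[OF ne] Cons.prems m by simp
    have "prodL mu eps (z # zs) c = sw (\<lambda>a b. z a * SI mu m b (pf zs)) (mu c)"
      by (simp add: IH)
    also have "\<dots> = sw (\<lambda>a b. SI mu m b (\<lambda>l. pf (z # zs) (a # l))) (mu c)"
      by (simp add: SI_mult)
    also have "\<dots> = SI mu (length (z # zs) - 1) c (pf (z # zs))"
      using m by (simp add: SI_Suc)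
    finally show ?thesis .
  qed
qed

end

context coaug
begin

lemma pf_VAN: "(\<forall>z\<in>set zs. lin z \<and> z g = 0) \<Longrightarrow> VAN sC g (length zs) (pf zs)"
proof -
  assume A: "\<forall>z\<in>set zs. lin z \<and> z g = 0"
  have "\<forall>pre post t. length pre + length post + 1 = length zs \<longrightarrow> pf zs (pre @ sC t g # post) = 0"
    using A
  proof (induct zs)
    case Nil
    then show ?case by simp
  next
    case (Cons z zs)
    show ?case
    proof (intro allI impI)
      fix pre post :: "'c list" and t assume L: "length pre + length post + 1 = length (z # zs)"
      show "pf (z # zs) (pre @ sC t g # post) = 0"
      proof (cases pre)
        case Nil
        then show ?thesis using Cons.prems lin_scale[of sC "(*)" z t g] by simp
      next
        case (Cons p pre')
        then show ?thesis using Cons.hyps[rule_format, of pre' post t] \<open>\<forall>z\<in>set (z # zs). lin z \<and> z g = 0\<close> L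
          by simp
      qed
    qed
  qed
  then show ?thesis by (simp add: VAN_iff)
qed

lemma prodL_van:
  assumes "plus_annihilated sC mu g n c" "\<forall>z\<in>set zs. lin z \<and> z g = 0" "Suc n \<le> length zs"
  shows "prodL mu eps zs c = 0"
proof -
  obtain m where m: "length zs = Suc m" using assms(3) by (cases "length zs") auto
  have "plus_annihilated sC mu g m c" using pa_mono[OF assms(1)] assms(3) m by simp
  moreover have "multilinear_form sC (Suc m) (pf zs)" using pf_ML[of zs] assms(2) m by simp
  moreover have "VAN sC g (Suc m) (pf zs)" using pf_VAN[of zs] assms(2) m by simp
  ultimately have "SI mu m c (pf zs) = 0" unfolding pa_alt by blast
  moreover have "zs \<noteq> []" using m by auto
  ultimately show ?thesis using prodL_SI[of zs c] assms(2) m by simp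
qed

end

locale contra = coalg sC mu eps for sC :: "'k::field \<Rightarrow> 'c::ab_group_add \<Rightarrow> 'c" and mu eps +
  fixes sP :: "'k \<Rightarrow> 'p::ab_group_add \<Rightarrow> 'p" and pi :: "('c \<Rightarrow> 'p) \<Rightarrow> 'p"
  assumes cm: "contramodule sC mu eps sP pi"
begin

abbreviation linP :: "('c \<Rightarrow> 'p) \<Rightarrow> bool" where "linP h \<equiv> Vector_Spaces.linear sC sP h"

abbreviation act :: "('c \<Rightarrow> 'k) \<Rightarrow> 'p \<Rightarrow> 'p" where "act \<equiv> contra_act sP pi"

lemma vsP: "vector_space sP" using cm by (simp add: contramodule_def)

sublocale P: vector_space sP by (rule vsP)

lemma pi_add: "linP h1 \<Longrightarrow> linP h2 \<Longrightarrow> pi (\<lambda>c. h1 c + h2 c) = pi h1 + pi h2"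
  using cm by (simp add: contramodule_def)
lemma pi_scale: "linP h \<Longrightarrow> pi (\<lambda>c. sP a (h c)) = sP a (pi h)"
  using cm by (simp add: contramodule_def)
lemma pi_assoc: "(\<And>v. linP (gg v)) \<Longrightarrow> (\<And>u. linP (\<lambda>v. gg v u)) \<Longrightarrow>
    pi (\<lambda>c. sw (\<lambda>a b. gg b a) (mu c)) = pi (\<lambda>c. pi (gg c))"
  using cm by (simp add: contramodule_def)
lemma pi_eps: "pi (\<lambda>c. sP (eps c) p) = p"
  using cm by (simp add: contramodule_def)

lemma linP_zero: "linP (\<lambda>c. 0)" by (rule lin_zero_fun[OF vsC vsP])

lemma pi_zero: "pi (\<lambda>c. 0) = 0"
  using pi_scale[OF linP_zero, of 0] by simp

lemma pi_diff: "linP h1 \<Longrightarrow> linP h2 \<Longrightarrow> pi (\<lambda>c. h1 c - h2 c) = pi h1 - pi h2"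
proof -
  assume A: "linP h1" "linP h2"
  have l: "linP (\<lambda>c. h1 c - h2 c)" by (rule lin_diff_fun[OF A])
  have "pi (\<lambda>c. (h1 c - h2 c) + h2 c) = pi (\<lambda>c. h1 c - h2 c) + pi h2" by (rule pi_add[OF l A(2)])
  then show ?thesis by (simp add: algebra_simps)
qed

lemma pi_sum: "(\<And>i. i \<in> I \<Longrightarrow> linP (h i)) \<Longrightarrow> pi (\<lambda>c. \<Sum>i\<in>I. h i c) = (\<Sum>i\<in>I. pi (h i))"
proof (induct I rule: infinite_finite_induct)
  case (infinite I)
  then show ?case by (simp add: pi_zero)
next
  case empty
  then show ?case by (simp add: pi_zero)
next
  case (insert i I)
  have "linP (\<lambda>c. \<Sum>i\<in>I. h i c)" by (rule lin_sum_fun[OF vsC vsP]) (use insert in auto)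
  then show ?case using insert pi_add[of "h i" "\<lambda>c. \<Sum>i\<in>I. h i c"] by simp
qed

lemma linP_act: "lin phi \<Longrightarrow> linP (\<lambda>c. sP (phi c) p)"
  by (rule lin_scale_const[OF _ vsP])

lemma act_add_p: "lin phi \<Longrightarrow> act phi (p + q) = act phi p + act phi q"
  unfolding contra_act_def
  using pi_add[OF linP_act[of phi p] linP_act[of phi q]] by (simp add: P.scale_right_distrib)

lemma act_zero_p: "lin phi \<Longrightarrow> act phi 0 = 0"
  unfolding contra_act_def by (simp add: pi_zero)

lemma act_diff_p: "lin phi \<Longrightarrow> act phi (p - q) = act phi p - act phi q"
  using act_add_p[of phi "p - q" q] by (simp add: algebra_simps)

lemma act_sum_p: "lin phi \<Longrightarrow> act phi (\<Sum>i\<in>I. p i) = (\<Sum>i\<in>I. act phi (p i))"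
  by (induct I rule: infinite_finite_induct) (auto simp: act_zero_p act_add_p)

lemma act_add_fn: "lin phi \<Longrightarrow> lin psi \<Longrightarrow> act (\<lambda>c. phi c + psi c) p = act phi p + act psi p"
  unfolding contra_act_def
  using pi_add[OF linP_act[of phi p] linP_act[of psi p]] by (simp add: P.scale_left_distrib)

lemma act_diff_fn: "lin phi \<Longrightarrow> lin psi \<Longrightarrow> act (\<lambda>c. phi c - psi c) p = act phi p - act psi p"
  unfolding contra_act_def
  using pi_diff[OF linP_act[of phi p] linP_act[of psi p]] by (simp add: P.scale_left_diff_distrib)

lemma act_eps: "act eps p = p"
  unfolding contra_act_def by (rule pi_eps)

lemma act_scal: "act (\<lambda>c. a * eps c) p = sP a p"
  unfolding contra_act_def
  using pi_scale[OF linP_act[OF eps_lin], of a p] by (simp add: pi_eps)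

lemma CM2: assumes "lin phi" "linP h"
  shows "act phi (pi h) = pi (\<lambda>c. sw (\<lambda>a b. sP (phi b) (h a)) (mu c))"
proof -
  define gg where "gg = (\<lambda>v u. sP (phi v) (h u))"
  have "pi (\<lambda>c. sw (\<lambda>a b. gg b a) (mu c)) = pi (\<lambda>c. pi (gg c))"
  proof (rule pi_assoc)
    fix v show "linP (gg v)" unfolding gg_def by (rule lin_scale_fun[OF assms(2)])
  next
    fix u show "linP (\<lambda>v. gg v u)" unfolding gg_def by (rule linP_act[OF assms(1)])
  qed
  moreover have "pi (gg c) = sP (phi c) (pi h)" for c unfolding gg_def by (rule pi_scale[OF assms(2)])
  ultimately show ?thesis unfolding contra_act_def gg_def by simp
qed

lemma scale_sw: "sP (sw f t) p = sw (\<lambda>a b. sP (f a b) p) t"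
  by (rule sw_hom[of "\<lambda>s. sP s p"]) (simp add: P.scale_left_distrib)

lemma CM3: assumes "lin phi" "lin psi"
  shows "act phi (act psi p) = act (dual_mult mu phi psi) p"
proof -
  have "act phi (act psi p) = pi (\<lambda>c. sw (\<lambda>a b. sP (phi b) (sP (psi a) p)) (mu c))"
    unfolding contra_act_def[of sP pi psi] by (rule CM2[OF assms(1) linP_act[OF assms(2)]])
  also have "\<dots> = act (dual_mult mu phi psi) p"
    unfolding contra_act_def dual_mult_def scale_sw by (simp add: mult.commute)
  finally show ?thesis .
qed

end


locale tele = contra sC mu eps sP pi + coaug sC mu eps g
  for sC :: "'k::field \<Rightarrow> 'c::ab_group_add \<Rightarrow> 'c" and mu eps and sP :: "'k \<Rightarrow> 'p::ab_group_add \<Rightarrow> 'p" and pi g +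
  fixes J :: "'j set" and x :: "'j \<Rightarrow> 'c \<Rightarrow> 'k"
  assumes finJ: "finite J" and xlin: "\<And>j. j \<in> J \<Longrightarrow> lin (x j)" and xg: "\<And>j. j \<in> J \<Longrightarrow> x j g = 0"
    and conil: "\<And>c. \<exists>n. plus_annihilated sC mu g n c"
begin

definition X :: "'j list \<Rightarrow> 'c \<Rightarrow> 'k" where "X w = prodL mu eps (map x w)"
definition Wd :: "nat \<Rightarrow> 'j list set" where "Wd N = {w. set w \<subseteq> J \<and> length w \<le> N}"
definition kl :: "nat \<Rightarrow> 'c \<Rightarrow> bool" where "kl N c \<longleftrightarrow> (\<forall>w. set w \<subseteq> J \<longrightarrow> N \<le> length w \<longrightarrow> X w c = 0)"
definition Nc :: "'c \<Rightarrow> nat" where "Nc c = (LEAST N. kl N c)"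
definition S :: "('j list \<Rightarrow> 'p) \<Rightarrow> 'c \<Rightarrow> 'p" where "S r c = (\<Sum>w\<in>Wd (Nc c). sP (X w c) (r w))"

lemma X_Nil: "X [] = eps" by (simp add: X_def)
lemma X_Cons: "X (j # w) c = sw (\<lambda>a b. x j a * X w b) (mu c)" by (simp add: X_def)
lemma X_lin: "set w \<subseteq> J \<Longrightarrow> lin (X w)"
  unfolding X_def by (rule prodL_lin) (use xlin in auto)

lemma finite_Wd: "finite (Wd N)"
  unfolding Wd_def by (rule finite_lists_length_le[OF finJ])

lemma kl_ex: "\<exists>N. kl N c"
proof -
  obtain n where n: "plus_annihilated sC mu g n c" using conil by blast
  have "kl (Suc n) c" unfolding kl_def X_def
  proof (intro allI impI)
    fix w :: "'j list" assume "set w \<subseteq> J" "Suc n \<le> length w"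
    then show "prodL mu eps (map x w) c = 0"
      by (intro prodL_van[OF n]) (auto simp: xlin xg)
  qed
  then show ?thesis by blast
qed

lemma kl_Nc: "kl (Nc c) c"
  unfolding Nc_def using kl_ex[of c] by (rule LeastI_ex)

lemma kl_mono: "kl N c \<Longrightarrow> N \<le> M \<Longrightarrow> kl M c"
  unfolding kl_def by auto

lemma sum_ext:
  assumes "kl N c" "N \<le> M"
  shows "(\<Sum>w\<in>Wd M. sP (X w c) (r w)) = (\<Sum>w\<in>Wd N. sP (X w c) (r w))"
proof (rule sum.mono_neutral_right[OF finite_Wd])
  show "Wd N \<subseteq> Wd M" using assms(2) unfolding Wd_def by auto
  show "\<forall>w\<in>Wd M - Wd N. sP (X w c) (r w) = 0"
    using assms(1) unfolding kl_def Wd_def by auto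
qed

lemma S_eq: "kl N c \<Longrightarrow> S r c = (\<Sum>w\<in>Wd N. sP (X w c) (r w))"
  unfolding S_def
  using sum_ext[where N=N and c=c and M="max N (Nc c)" and r=r] sum_ext[OF kl_Nc, where M="max N (Nc c)" and r=r] by simp

lemma S_lin: "linP (S r)"
proof (rule linI[OF vsC vsP])
  fix c c'
  define N where "N = max (Nc c) (max (Nc c') (Nc (c + c')))"
  have k: "kl N c" "kl N c'" "kl N (c + c')"
    unfolding N_def by (rule kl_mono[OF kl_Nc], simp)+
  have "S r (c + c') = (\<Sum>w\<in>Wd N. sP (X w (c + c')) (r w))" by (rule S_eq[OF k(3)])
  also have "\<dots> = (\<Sum>w\<in>Wd N. sP (X w c) (r w) + sP (X w c') (r w))"
    by (rule sum.cong) (auto simp: Wd_def lin_add[OF X_lin] P.scale_left_distrib)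
  also have "\<dots> = S r c + S r c'" by (simp add: sum.distrib S_eq[OF k(1)] S_eq[OF k(2)])
  finally show "S r (c + c') = S r c + S r c'" .
next
  fix a c
  define N where "N = max (Nc c) (Nc (sC a c))"
  have k: "kl N c" "kl N (sC a c)"
    unfolding N_def by (rule kl_mono[OF kl_Nc], simp)+
  have "S r (sC a c) = (\<Sum>w\<in>Wd N. sP (X w (sC a c)) (r w))" by (rule S_eq[OF k(2)])
  also have "\<dots> = (\<Sum>w\<in>Wd N. sP a (sP (X w c) (r w)))"
    by (rule sum.cong) (auto simp: Wd_def lin_scale[OF X_lin])
  also have "\<dots> = sP a (S r c)" by (simp add: P.scale_sum_right S_eq[OF k(1)])
  finally show "S r (sC a c) = sP a (S r c)" .
qed

lemma Wd_Suc: "Wd (Suc N) = insert [] ((\<lambda>(j, w). j # w) ` (J \<times> Wd N))"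
proof
  show "Wd (Suc N) \<subseteq> insert [] ((\<lambda>(j, w). j # w) ` (J \<times> Wd N))"
  proof
    fix w assume w: "w \<in> Wd (Suc N)"
    show "w \<in> insert [] ((\<lambda>(j, w). j # w) ` (J \<times> Wd N))"
    proof (cases w)
      case (Cons j w')
      then have "(j, w') \<in> J \<times> Wd N" using w by (auto simp: Wd_def)
      then show ?thesis using Cons by force
    qed simp
  qed
  show "insert [] ((\<lambda>(j, w). j # w) ` (J \<times> Wd N)) \<subseteq> Wd (Suc N)"
    by (auto simp: Wd_def)
qed

lemma sum_Wd_Suc: "(\<Sum>w\<in>Wd (Suc N). F w) = F [] + (\<Sum>w\<in>Wd N. \<Sum>j\<in>J. F (j # w))"
proof -
  have inj: "inj_on (\<lambda>(j, w). j # w) (J \<times> Wd N)" by (auto simp: inj_on_def)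
  have fin: "finite ((\<lambda>(j, w). j # w) ` (J \<times> Wd N))" using finJ finite_Wd by auto
  have "(\<Sum>w\<in>Wd (Suc N). F w) = F [] + (\<Sum>w\<in>(\<lambda>(j, w). j # w) ` (J \<times> Wd N). F w)"
    unfolding Wd_Suc by (rule sum.insert[OF fin]) auto
  also have "(\<Sum>w\<in>(\<lambda>(j, w). j # w) ` (J \<times> Wd N). F w) = (\<Sum>(j, w)\<in>J \<times> Wd N. F (j # w))"
    by (subst sum.reindex[OF inj]) (simp add: case_prod_unfold)
  also have "\<dots> = (\<Sum>j\<in>J. \<Sum>w\<in>Wd N. F (j # w))" by (rule sum.cartesian_product[symmetric])
  also have "\<dots> = (\<Sum>w\<in>Wd N. \<Sum>j\<in>J. F (j # w))" by (rule sum.swap)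
  finally show ?thesis .
qed

lemma lin_xq: "linP (\<lambda>u. \<Sum>j\<in>J. sP (x j u) (r j))"
  by (rule lin_sum_fun[OF vsC vsP]) (simp add: lin_scale_const[OF xlin vsP])

lemma telescope:
  fixes D :: "'a \<Rightarrow> 'p"
  assumes H: "\<And>\<xi>. \<exists>\<eta>. D \<xi> = (\<Sum>j\<in>J. act (x j) (D (\<eta> j)))"
  shows "D \<xi>0 = 0"
proof -
  obtain nx where nx: "\<And>\<xi>. D \<xi> = (\<Sum>j\<in>J. act (x j) (D (nx \<xi> j)))"
    using H by metis
  define tr :: "'j list \<Rightarrow> 'a" where "tr = rec_list \<xi>0 (\<lambda>j w r. nx r j)"
  have tr_Nil: "tr [] = \<xi>0" and tr_Cons: "tr (j # w) = nx (tr w) j" for j w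
    by (simp_all add: tr_def)
  define q where "q w = D (tr w)" for w
  have q_rec: "q w = (\<Sum>j\<in>J. act (x j) (q (j # w)))" for w
    unfolding q_def tr_Cons by (rule nx)
  define gg where "gg = (\<lambda>v u. S (\<lambda>w. \<Sum>j\<in>J. sP (x j u) (q (j # w))) v)"
  have gg_lin1: "linP (gg v)" for v
  proof -
    have "gg v = (\<lambda>u. \<Sum>w\<in>Wd (Nc v). sP (X w v) (\<Sum>j\<in>J. sP (x j u) (q (j # w))))"
      unfolding gg_def S_def by simp
    moreover have "linP (\<lambda>u. \<Sum>w\<in>Wd (Nc v). sP (X w v) (\<Sum>j\<in>J. sP (x j u) (q (j # w))))"
      by (rule lin_sum_fun[OF vsC vsP]) (rule lin_scale_fun[OF lin_xq])
    ultimately show ?thesis by simp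
  qed
  have gg_lin2: "linP (\<lambda>v. gg v u)" for u unfolding gg_def by (rule S_lin)
  have A: "pi (\<lambda>c. sw (\<lambda>a b. gg b a) (mu c)) = pi (\<lambda>c. pi (gg c))"
    by (rule pi_assoc[OF gg_lin1 gg_lin2])
  have R: "pi (gg c) = S q c" for c
  proof -
    have "pi (gg c) = pi (\<lambda>u. \<Sum>w\<in>Wd (Nc c). sP (X w c) (\<Sum>j\<in>J. sP (x j u) (q (j # w))))"
      unfolding gg_def S_def by simp
    also have "\<dots> = (\<Sum>w\<in>Wd (Nc c). pi (\<lambda>u. sP (X w c) (\<Sum>j\<in>J. sP (x j u) (q (j # w)))))"
      by (rule pi_sum) (rule lin_scale_fun[OF lin_xq])
    also have "\<dots> = (\<Sum>w\<in>Wd (Nc c). sP (X w c) (pi (\<lambda>u. \<Sum>j\<in>J. sP (x j u) (q (j # w)))))"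
      by (rule sum.cong[OF refl]) (rule pi_scale[OF lin_xq])
    also have "\<dots> = (\<Sum>w\<in>Wd (Nc c). sP (X w c) (\<Sum>j\<in>J. act (x j) (q (j # w))))"
    proof (rule sum.cong[OF refl])
      fix w
      have "pi (\<lambda>u. \<Sum>j\<in>J. sP (x j u) (q (j # w))) = (\<Sum>j\<in>J. pi (\<lambda>u. sP (x j u) (q (j # w))))"
        by (rule pi_sum) (rule linP_act[OF xlin])
      then show "sP (X w c) (pi (\<lambda>u. \<Sum>j\<in>J. sP (x j u) (q (j # w)))) = sP (X w c) (\<Sum>j\<in>J. act (x j) (q (j # w)))"
        by (simp add: contra_act_def)
    qed
    also have "\<dots> = S q c"
      unfolding S_def by (rule sum.cong[OF refl]) (simp only: q_rec[symmetric])
    finally show ?thesis .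
  qed
  have L: "sw (\<lambda>a b. gg b a) (mu c) = S q c - sP (eps c) (q [])" for c
  proof -
    define N where "N = Max (insert (Nc c) ((\<lambda>p. Nc (snd p)) ` set (mu c)))"
    have kc: "kl N c" unfolding N_def by (rule kl_mono[OF kl_Nc]) simp
    have kb: "kl N b" if "(a, b) \<in> set (mu c)" for a b
    proof -
      have "Nc b \<in> insert (Nc c) ((\<lambda>p. Nc (snd p)) ` set (mu c))"
        using that by (auto intro!: image_eqI[where x="(a, b)"])
      then have "Nc b \<le> N" unfolding N_def by (intro Max_ge) auto
      then show ?thesis by (rule kl_mono[OF kl_Nc])
    qed
    have "sw (\<lambda>a b. gg b a) (mu c) =
        sw (\<lambda>a b. \<Sum>w\<in>Wd N. sP (X w b) (\<Sum>j\<in>J. sP (x j a) (q (j # w)))) (mu c)"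
      unfolding gg_def by (rule sw_cong) (rule S_eq[OF kb])
    also have "\<dots> = sw (\<lambda>a b. \<Sum>w\<in>Wd N. \<Sum>j\<in>J. sP (x j a * X w b) (q (j # w))) (mu c)"
      by (simp add: P.scale_sum_right mult.commute)
    also have "\<dots> = (\<Sum>w\<in>Wd N. \<Sum>j\<in>J. sP (X (j # w) c) (q (j # w)))"
      by (simp add: sw_sum X_Cons scale_sw)
    also have "\<dots> = (\<Sum>w\<in>Wd (Suc N). sP (X w c) (q w)) - sP (eps c) (q [])"
      by (simp add: sum_Wd_Suc X_Nil)
    also have "\<dots> = S q c - sP (eps c) (q [])"
      using S_eq[OF kl_mono[OF kc, of "Suc N"], of q] by simp
    finally show ?thesis .
  qed
  have "pi (\<lambda>c. S q c - sP (eps c) (q [])) = pi (S q) - q []"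
    using pi_diff[OF S_lin linP_act[OF eps_lin]] pi_eps by simp
  then have "pi (S q) - q [] = pi (S q)" using A L R by simp
  then have "q [] = 0" by simp
  then show ?thesis by (simp add: q_def tr_Nil)
qed

end


lemma fsum_apply: "(\<Sum>i\<in>I. f i) u = (\<Sum>i\<in>I. f i u)"
  by (induct I rule: infinite_finite_induct) (auto simp: plus_fun_def zero_fun_def)

lemma MF_add:
  fixes sC :: "'k::field \<Rightarrow> 'c::ab_group_add \<Rightarrow> 'c" and A B :: "'c list \<Rightarrow> 'k"
  shows "multilinear_form sC n A \<Longrightarrow> multilinear_form sC n B \<Longrightarrow> multilinear_form sC n (\<lambda>l. A l + B l)"
  unfolding MF_iff by (auto intro: lin_add_fun)

lemma MF_diff:
  fixes sC :: "'k::field \<Rightarrow> 'c::ab_group_add \<Rightarrow> 'c" and A B :: "'c list \<Rightarrow> 'k"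
  shows "multilinear_form sC n A \<Longrightarrow> multilinear_form sC n B \<Longrightarrow> multilinear_form sC n (\<lambda>l. A l - B l)"
  unfolding MF_iff by (auto intro: lin_diff_fun)

lemma MF_scale:
  fixes sC :: "'k::field \<Rightarrow> 'c::ab_group_add \<Rightarrow> 'c" and A :: "'c list \<Rightarrow> 'k"
  shows "multilinear_form sC n A \<Longrightarrow> multilinear_form sC n (\<lambda>l. a * A l)"
  unfolding MF_iff by (auto intro: lin_mult_left)

lemma MF_sum:
  fixes sC :: "'k::field \<Rightarrow> 'c::ab_group_add \<Rightarrow> 'c" and A :: "'i \<Rightarrow> 'c list \<Rightarrow> 'k"
  assumes vs: "vector_space sC" and "\<And>i. i \<in> I \<Longrightarrow> multilinear_form sC n (A i)"
  shows "multilinear_form sC n (\<lambda>l. \<Sum>i\<in>I. A i l)"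
  using assms(2) unfolding MF_iff by (auto intro!: lin_sum_fun[OF vs vs_field])

lemma VAN_add: "VAN sC g n A \<Longrightarrow> VAN sC g n B \<Longrightarrow> VAN sC g n (\<lambda>l. A l + B l)"
  unfolding VAN_def by auto
lemma VAN_diff: "VAN sC g n A \<Longrightarrow> VAN sC g n B \<Longrightarrow> VAN sC g n (\<lambda>l. (A l::'k::field) - B l)"
  unfolding VAN_def by auto
lemma VAN_scale: "VAN sC g n A \<Longrightarrow> VAN sC g n (\<lambda>l. (a::'k::field) * A l)"
  unfolding VAN_def by auto
lemma VAN_sum: "(\<And>i. i \<in> I \<Longrightarrow> VAN sC g n (A i)) \<Longrightarrow> VAN sC g n (\<lambda>l. \<Sum>i\<in>I. (A i l::'k::field))"
  unfolding VAN_def by auto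

lemma take_mid: "length pre < n \<Longrightarrow> take n (pre @ x # post) = pre @ x # take (n - length pre - 1) post"
  by (simp add: take_Cons' )

lemma drop_mid: "length pre < n \<Longrightarrow> drop n (pre @ x # post) = drop (n - length pre - 1) post"
  by (simp add: drop_Cons')

lemma MF_concat:
  fixes sC :: "'k::field \<Rightarrow> 'c::ab_group_add \<Rightarrow> 'c" and A B :: "'c list \<Rightarrow> 'k"
  assumes A: "multilinear_form sC n A" and B: "multilinear_form sC m B"
  shows "multilinear_form sC (n + m) (\<lambda>l. A (take n l) * B (drop n l))"
  unfolding MF_iff
proof (intro allI impI)
  fix pre post :: "'c list" assume L: "length pre + length post + 1 = n + m"
  show "Vector_Spaces.linear sC (*) (\<lambda>x. A (take n (pre @ x # post)) * B (drop n (pre @ x # post)))"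
  proof (cases "length pre < n")
    case True
    have "length pre + length (take (n - length pre - 1) post) + 1 = n" using True L by auto
    then have "Vector_Spaces.linear sC (*) (\<lambda>x. A (pre @ x # take (n - length pre - 1) post))"
      using A unfolding MF_iff by blast
    then show ?thesis unfolding take_mid[OF True] drop_mid[OF True] by (rule lin_mult_right)
  next
    case False
    have "Vector_Spaces.linear sC (*) (\<lambda>x. B (drop n pre @ x # post))"
      using B False L unfolding MF_iff by auto
    then show ?thesis using False by (simp add: lin_mult_left)
  qed
qed

lemma VAN_concat:
  fixes sC :: "'k::field \<Rightarrow> 'c::ab_group_add \<Rightarrow> 'c" and A B :: "'c list \<Rightarrow> 'k"
  assumes A: "VAN sC g n A" and B: "VAN sC g m B"
  shows "VAN sC g (n + m) (\<lambda>l. A (take n l) * B (drop n l))"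
  unfolding VAN_iff
proof (intro allI impI)
  fix pre post :: "'c list" and t assume L: "length pre + length post + 1 = n + m"
  show "A (take n (pre @ sC t g # post)) * B (drop n (pre @ sC t g # post)) = 0"
  proof (cases "length pre < n")
    case True
    have "length pre + length (take (n - length pre - 1) post) + 1 = n" using True L by auto
    then have "A (pre @ sC t g # take (n - length pre - 1) post) = 0"
      using A unfolding VAN_iff by blast
    then show ?thesis unfolding take_mid[OF True] drop_mid[OF True] by simp
  next
    case False
    have "B (drop n pre @ sC t g # post) = 0"
      using B False L unfolding VAN_iff by auto
    then show ?thesis using False by simp
  qed
qed

locale h1 = coaug sC mu eps g for sC :: "'k::field \<Rightarrow> 'c::ab_group_add \<Rightarrow> 'c" and mu eps g +
  fixes S0 :: "'c set"
  assumes conil: "\<And>c. \<exists>n. plus_annihilated sC mu g n c"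
    and finS: "finite S0" and H1: "\<And>y. plus_annihilated sC mu g 1 y \<Longrightarrow> y \<in> C.span (insert g S0)"
begin

definition Hs :: "'c set" where "Hs = {y. plus_annihilated sC mu g 1 y}"

lemma g_ne0: "g \<noteq> 0"
  using eps_g lin_0[OF eps_lin] by auto

lemma BW_ex: "\<exists>B. g \<in> B \<and> B \<subseteq> C.span (insert g S0) \<and> C.independent B \<and> C.span (insert g S0) \<subseteq> C.span B"
proof -
  have "{g} \<subseteq> C.span (insert g S0)" by (simp add: C.span_base)
  moreover have "C.independent {g}" using g_ne0 by simp
  ultimately obtain B where "{g} \<subseteq> B" "B \<subseteq> C.span (insert g S0)" "C.independent B" "C.span (insert g S0) \<subseteq> C.span B"
    by (rule C.maximal_independent_subset_extend)
  then show ?thesis by blast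
qed

definition BW :: "'c set" where
  "BW = (SOME B. g \<in> B \<and> B \<subseteq> C.span (insert g S0) \<and> C.independent B \<and> C.span (insert g S0) \<subseteq> C.span B)"

lemma BW: "g \<in> BW" "BW \<subseteq> C.span (insert g S0)" "C.independent BW" "C.span (insert g S0) \<subseteq> C.span BW"
  using someI_ex[OF BW_ex] unfolding BW_def by blast+

lemma finBW: "finite BW"
  using C.independent_span_bound[OF _ BW(3) BW(2)] finS by simp

definition Bf :: "'c set" where "Bf = C.extend_basis BW"

lemma Bf: "BW \<subseteq> Bf" "C.independent Bf" "C.span Bf = UNIV"
  unfolding Bf_def using C.extend_basis_superset[OF BW(3)] C.independent_extend_basis[OF BW(3)]
    C.span_extend_basis[OF BW(3)] by auto

definition coord :: "'c \<Rightarrow> 'c \<Rightarrow> 'k" where "coord b y = C.representation Bf y b"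

lemma coord_lin: "lin (coord b)"
  unfolding coord_def by (rule C.linear_representation[OF Bf(2,3)])

lemma coord_basis: "b \<in> Bf \<Longrightarrow> b' \<in> Bf \<Longrightarrow> coord b b' = (if b = b' then 1 else 0)"
  unfolding coord_def using C.representation_basis[OF Bf(2), of b'] by auto

lemma W_expand: "y \<in> C.span BW \<Longrightarrow> y = (\<Sum>b\<in>BW. sC (coord b y) b)"
  unfolding coord_def
  using C.representation_extend[OF Bf(2) _ Bf(1), of y] C.sum_representation_eq[OF BW(3) _ finBW, of y]
  by simp

lemma Hs_W: "y \<in> Hs \<Longrightarrow> y \<in> C.span BW"
  using H1 BW(4) unfolding Hs_def by blast

definition JJ :: "'c set" where "JJ = BW - {g}"

lemma finJJ: "finite JJ" unfolding JJ_def using finBW by simp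

lemma coord_g: "j \<in> JJ \<Longrightarrow> coord j g = 0"
  unfolding JJ_def using coord_basis[of j g] Bf(1) BW(1) by auto

lemma SI1_lin: "multilinear_form sC 2 Om \<Longrightarrow> lin (\<lambda>y. SI mu 1 y Om)"
  using SI_lin[of 1 Om] by (simp add: numeral_2_eq_2)

lemma Hs_alt: "y \<in> Hs \<longleftrightarrow> (\<forall>Om. multilinear_form sC 2 Om \<and> VAN sC g 2 Om \<longrightarrow> SI mu 1 y Om = 0)"
  unfolding Hs_def pa_alt by (simp add: numeral_2_eq_2)

lemma Hs_sub: "C.subspace Hs"
  unfolding C.subspace_def
proof (intro conjI ballI allI)
  show "0 \<in> Hs" unfolding Hs_alt using lin_0[OF SI1_lin] by blast
  fix x y assume "x \<in> Hs" "y \<in> Hs"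
  then show "x + y \<in> Hs" unfolding Hs_alt using lin_add[OF SI1_lin] by (metis add_0)
next
  fix c x assume "x \<in> Hs"
  then show "sC c x \<in> Hs" unfolding Hs_alt using lin_scale[OF SI1_lin] by (metis mult_zero_right)
qed

lemma PA0: assumes "plus_annihilated sC mu g 0 c" shows "c \<in> C.span {g}"
proof (rule ccontr)
  assume "c \<notin> C.span {g}"
  then obtain F where F: "lin F" "\<forall>u\<in>C.span {g}. F u = 0" "F c = 1"
    using separate[OF vsC] by blast
  have "multilinear_form sC (Suc 0) (\<lambda>l. F (hd l))"
    unfolding MF_iff using F(1) by auto
  moreover have "VAN sC g (Suc 0) (\<lambda>l. F (hd l))"
    unfolding VAN_iff using F(2) by (auto intro: C.span_scale C.span_base)
  ultimately have "SI mu 0 c (\<lambda>l. F (hd l)) = 0" using assms unfolding pa_alt by blast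
  then show False using F(3) by simp
qed

end


lemma MF_cong:
  fixes sC :: "'k::field \<Rightarrow> 'c::ab_group_add \<Rightarrow> 'c" and A B :: "'c list \<Rightarrow> 'k"
  assumes "\<And>l. length l = n \<Longrightarrow> A l = B l" "multilinear_form sC n A"
  shows "multilinear_form sC n B"
  unfolding MF_iff
proof (intro allI impI)
  fix pre post :: "'c list" assume L: "length pre + length post + 1 = n"
  then have "(\<lambda>x. B (pre @ x # post)) = (\<lambda>x. A (pre @ x # post))" using assms(1) by auto
  then show "Vector_Spaces.linear sC (*) (\<lambda>x. B (pre @ x # post))" using assms(2) L unfolding MF_iff by simp
qed

lemma VAN_cong:
  assumes "\<And>l. length l = n \<Longrightarrow> A l = B l" "VAN sC g n A"
  shows "VAN sC g n B"
  using assms unfolding VAN_def by metis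

lemma MF_tail:
  fixes sC :: "'k::field \<Rightarrow> 'c::ab_group_add \<Rightarrow> 'c" and A :: "'c list \<Rightarrow> 'k"
  shows "multilinear_form sC (Suc n) A \<Longrightarrow> multilinear_form sC n (\<lambda>l. A (a # l))"
  unfolding MF_iff
proof (intro allI impI)
  fix pre post :: "'c list"
  assume "\<forall>pre post. length pre + length post + 1 = Suc n \<longrightarrow> Vector_Spaces.linear sC (*) (\<lambda>x. A (pre @ x # post))"
    "length pre + length post + 1 = n"
  then show "Vector_Spaces.linear sC (*) (\<lambda>x. A (a # pre @ x # post))"
    by (auto dest: spec[of _ "a # pre"])
qed

lemma MF_head:
  fixes sC :: "'k::field \<Rightarrow> 'c::ab_group_add \<Rightarrow> 'c" and A :: "'c list \<Rightarrow> 'k"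
  shows "multilinear_form sC (Suc n) A \<Longrightarrow> length l = n \<Longrightarrow> Vector_Spaces.linear sC (*) (\<lambda>a. A (a # l))"
  unfolding MF_iff by (auto dest: spec[of _ "[]"])

context coalg
begin

lemma SI_lin_head: assumes that: "multilinear_form sC (Suc (Suc m)) A" shows "lin (\<lambda>a. SI mu m b (\<lambda>l. A (a # l)))"
  unfolding SI_def
proof (rule lin_sum_list_fun[OF vsC vs_field])
  fix l assume "l \<in> set (iter_comult mu m b)"
  then have "length l = Suc m" by (rule iter_len)
  then show "lin (\<lambda>a. A (a # l))" by (rule MF_head[OF that])
qed

end

context h1
begin

definition indH :: "'c set \<Rightarrow> bool" where
  "indH T \<longleftrightarrow> (\<forall>a. (\<Sum>t\<in>T. sC (a t) t) \<in> Hs \<longrightarrow> (\<forall>t\<in>T. a t = 0))"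

definition sF :: "'k \<Rightarrow> ('c \<Rightarrow> 'k) \<Rightarrow> ('c \<Rightarrow> 'k)" where "sF a f = (\<lambda>u. a * f u)"

lemma vsF: "vector_space sF"
  by unfold_locales (auto simp: sF_def fun_eq_iff algebra_simps plus_fun_def)

lemma MF2_zero: "multilinear_form sC 2 (\<lambda>l. 0)"
  unfolding MF_iff by (auto intro: lin_zero_fun[OF vsC vs_field])

lemma VAN_zero: "VAN sC g n (\<lambda>l. 0)"
  unfolding VAN_def by simp

lemma sum_delta_scale: "finite T \<Longrightarrow> y \<in> T \<Longrightarrow> (\<Sum>t\<in>T. sC (if t = y then 1 else 0) t) = y"
proof -
  assume "finite T" "y \<in> T"
  have "(\<Sum>t\<in>T. sC (if t = y then 1 else 0) t) = (\<Sum>t\<in>T. if t = y then t else 0)"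
    by (rule sum.cong) auto
  then show ?thesis using \<open>finite T\<close> \<open>y \<in> T\<close> by simp
qed

lemma K2:
  assumes finT: "finite T" and ind: "indH T" and s: "s \<in> T"
  shows "\<exists>Om. multilinear_form sC 2 Om \<and> VAN sC g 2 Om \<and> (\<forall>t\<in>T. SI mu 1 t Om = (if t = s then 1 else 0))"
proof -
  interpret F: vector_space sF by (rule vsF)
  define Lam where "Lam = {f. \<exists>Om. multilinear_form sC 2 Om \<and> VAN sC g 2 Om \<and> f = (\<lambda>t. if t \<in> T then SI mu 1 t Om else 0)}"
  have sub: "F.subspace Lam"
    unfolding F.subspace_def
  proof (intro conjI ballI allI)
    show "0 \<in> Lam" unfolding Lam_def
      by (rule CollectI, rule exI[of _ "\<lambda>l. 0"]) (auto simp: MF2_zero VAN_zero fun_eq_iff)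
  next
    fix f1 f2 assume "f1 \<in> Lam" "f2 \<in> Lam"
    then obtain O1 O2 where O: "multilinear_form sC 2 O1" "VAN sC g 2 O1" "f1 = (\<lambda>t. if t \<in> T then SI mu 1 t O1 else 0)"
      "multilinear_form sC 2 O2" "VAN sC g 2 O2" "f2 = (\<lambda>t. if t \<in> T then SI mu 1 t O2 else 0)"
      unfolding Lam_def by blast
    show "f1 + f2 \<in> Lam" unfolding Lam_def
      by (rule CollectI, rule exI[of _ "\<lambda>l. O1 l + O2 l"])
        (auto simp: O MF_add VAN_add fun_eq_iff SI_add)
  next
    fix c f assume "f \<in> Lam"
    then obtain O1 where O: "multilinear_form sC 2 O1" "VAN sC g 2 O1" "f = (\<lambda>t. if t \<in> T then SI mu 1 t O1 else 0)"
      unfolding Lam_def by blast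
    show "sF c f \<in> Lam" unfolding Lam_def
      by (rule CollectI, rule exI[of _ "\<lambda>l. c * O1 l"])
        (auto simp: O MF_scale VAN_scale fun_eq_iff SI_mult sF_def)
  qed
  define e where "e = (\<lambda>t. if t = s then 1 else (0::'k))"
  have "e \<in> Lam"
  proof (rule ccontr)
    assume "e \<notin> Lam"
    have spL: "F.span Lam = Lam" using sub F.span_eq_iff by blast
    have "e \<notin> F.span Lam" unfolding spL by (rule \<open>e \<notin> Lam\<close>)
    then obtain Xi where Xi: "Vector_Spaces.linear sF (*) Xi" "\<forall>u\<in>F.span Lam. Xi u = 0" "Xi e = 1"
      using separate[OF vsF] by blast
    define a where "a t = Xi (\<lambda>u. if u = t then 1 else 0)" for t
    have expand: "Xi f = (\<Sum>t\<in>T. f t * a t)" if f0: "\<forall>u. u \<notin> T \<longrightarrow> f u = 0" for f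
    proof -
      have "f = (\<Sum>t\<in>T. sF (f t) (\<lambda>u. if u = t then 1 else 0))"
      proof
        fix u
        have "(\<Sum>t\<in>T. sF (f t) (\<lambda>u. if u = t then 1 else 0)) u = (\<Sum>t\<in>T. if u = t then f t else 0)"
          unfolding fsum_apply sF_def by (rule sum.cong) auto
        also have "\<dots> = f u" using finT f0 by simp
        finally show "f u = (\<Sum>t\<in>T. sF (f t) (\<lambda>u. if u = t then 1 else 0)) u" by simp
      qed
      then have "Xi f = Xi (\<Sum>t\<in>T. sF (f t) (\<lambda>u. if u = t then 1 else 0))" by simp
      also have "\<dots> = (\<Sum>t\<in>T. f t * a t)"
        by (simp add: lin_sum[OF Xi(1)] lin_scale[OF Xi(1)] a_def)
      finally show ?thesis .
    qed
    have "(\<Sum>t\<in>T. sC (a t) t) \<in> Hs"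
      unfolding Hs_alt
    proof (intro allI impI)
      fix Om assume Om: "multilinear_form sC 2 Om \<and> VAN sC g 2 Om"
      have l: "lin (\<lambda>y. SI mu 1 y Om)" using SI1_lin Om by blast
      have mem: "(\<lambda>t. if t \<in> T then SI mu 1 t Om else 0) \<in> F.span Lam"
        using Om by (auto simp: Lam_def intro: F.span_base)
      have "0 = Xi (\<lambda>t. if t \<in> T then SI mu 1 t Om else 0)" using Xi(2) mem by simp
      also have "\<dots> = (\<Sum>t\<in>T. (if t \<in> T then SI mu 1 t Om else 0) * a t)" by (rule expand) auto
      also have "\<dots> = (\<Sum>t\<in>T. a t * SI mu 1 t Om)" by (rule sum.cong) auto
      also have "\<dots> = SI mu 1 (\<Sum>t\<in>T. sC (a t) t) Om" unfolding lin_sum[OF l] lin_scale[OF l] by (rule refl)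
      finally show "SI mu 1 (\<Sum>t\<in>T. sC (a t) t) Om = 0" by simp
    qed
    then have "\<forall>t\<in>T. a t = 0" using ind unfolding indH_def by blast
    moreover have "Xi e = (\<Sum>t\<in>T. e t * a t)" by (rule expand) (use s in \<open>auto simp: e_def\<close>)
    ultimately have "Xi e = 0" by simp
    then show False using Xi(3) by simp
  qed
  then obtain Om where Om: "multilinear_form sC 2 Om" "VAN sC g 2 Om" "e = (\<lambda>t. if t \<in> T then SI mu 1 t Om else 0)"
    unfolding Lam_def by blast
  have "\<forall>t\<in>T. SI mu 1 t Om = (if t = s then 1 else 0)"
  proof
    fix t assume "t \<in> T"
    then show "SI mu 1 t Om = (if t = s then 1 else 0)" using fun_cong[OF Om(3), of t] by (simp add: e_def)
  qed
  then show ?thesis using Om by blast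
qed

lemma K3:
  assumes finY: "finite Y"
  shows "\<exists>T Om. finite T \<and> (\<forall>t\<in>T. multilinear_form sC 2 (Om t) \<and> VAN sC g 2 (Om t)) \<and>
     (\<forall>y\<in>Y. y - (\<Sum>t\<in>T. sC (SI mu 1 y (Om t)) t) \<in> Hs)"
proof -
  define P where "P T \<longleftrightarrow> T \<subseteq> Y \<and> indH T" for T
  have P0: "P {}" by (simp add: P_def indH_def)
  have bnd: "\<forall>T. P T \<longrightarrow> card T < Suc (card Y)"
    using card_mono[OF finY] by (auto simp: P_def less_Suc_eq_le)
  obtain T where PT: "P T" and maxT: "\<forall>T'. P T' \<longrightarrow> card T' \<le> card T"
    using ex_has_greatest_nat[OF P0 bnd] by blast
  have finT: "finite T" using PT finY by (auto simp: P_def intro: finite_subset)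
  have indT: "indH T" using PT by (simp add: P_def)
  have "\<forall>s\<in>T. \<exists>Om. multilinear_form sC 2 Om \<and> VAN sC g 2 Om \<and> (\<forall>t\<in>T. SI mu 1 t Om = (if t = s then 1 else 0))"
    using K2[OF finT indT] by blast
  then obtain Om where Om: "\<And>s. s \<in> T \<Longrightarrow> multilinear_form sC 2 (Om s) \<and> VAN sC g 2 (Om s) \<and>
      (\<forall>t\<in>T. SI mu 1 t (Om s) = (if t = s then 1 else 0))"
    by (metis bchoice)
  have cover: "\<exists>b. y - (\<Sum>t\<in>T. sC (b t) t) \<in> Hs" if y: "y \<in> Y" for y
  proof (cases "y \<in> T")
    case True
    have "y - (\<Sum>t\<in>T. sC (if t = y then 1 else 0) t) = 0" using sum_delta_scale[OF finT True] by simp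
    then show ?thesis using C.subspace_0[OF Hs_sub] by metis
  next
    case False
    have "\<not> indH (insert y T)"
    proof
      assume "indH (insert y T)"
      then have "P (insert y T)" using PT y by (simp add: P_def)
      then have "card (insert y T) \<le> card T" using maxT by blast
      then show False using False finT by simp
    qed
    then obtain a where a: "(\<Sum>t\<in>insert y T. sC (a t) t) \<in> Hs" "\<exists>t\<in>insert y T. a t \<noteq> 0"
      unfolding indH_def by blast
    have sum_ins: "(\<Sum>t\<in>insert y T. sC (a t) t) = sC (a y) y + (\<Sum>t\<in>T. sC (a t) t)"
      using False finT by simp
    have ay: "a y \<noteq> 0"
    proof
      assume a0: "a y = 0"
      then have "(\<Sum>t\<in>T. sC (a t) t) \<in> Hs" using a(1) sum_ins by simp
      then have "\<forall>t\<in>T. a t = 0" using indT unfolding indH_def by blast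
      then show False using a(2) a0 by auto
    qed
    define b where "b t = - (a t / a y)" for t
    have "y - (\<Sum>t\<in>T. sC (b t) t) = sC (inverse (a y)) (sC (a y) y + (\<Sum>t\<in>T. sC (a t) t))"
    proof -
      have "sC (b t) t = - sC (inverse (a y)) (sC (a t) t)" for t
        by (simp add: b_def divide_inverse mult.commute)
      then have "(\<Sum>t\<in>T. sC (b t) t) = - sC (inverse (a y)) (\<Sum>t\<in>T. sC (a t) t)"
        by (simp add: sum_negf C.scale_sum_right)
      then show ?thesis using ay by (simp add: C.scale_right_distrib)
    qed
    then have "y - (\<Sum>t\<in>T. sC (b t) t) \<in> Hs"
      using C.subspace_scale[OF Hs_sub] a(1) sum_ins by metis
    then show ?thesis by blast
  qed
  show ?thesis
  proof (intro exI conjI ballI)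
    show "finite T" by (rule finT)
    fix t assume "t \<in> T" then show "multilinear_form sC 2 (Om t)" "VAN sC g 2 (Om t)" using Om by auto
  next
    fix y assume y: "y \<in> Y"
    obtain b where b: "y - (\<Sum>t\<in>T. sC (b t) t) \<in> Hs" using cover[OF y] by blast
    define h where "h = y - (\<Sum>t\<in>T. sC (b t) t)"
    have coef: "SI mu 1 y (Om s) = b s" if s: "s \<in> T" for s
    proof -
      have l: "lin (\<lambda>y. SI mu 1 y (Om s))" using SI1_lin Om s by blast
      have yh: "y = h + (\<Sum>t\<in>T. sC (b t) t)" by (simp add: h_def)
      have e1: "SI mu 1 (\<Sum>t\<in>T. sC (b t) t) (Om s) = (\<Sum>t\<in>T. b t * SI mu 1 t (Om s))"
        unfolding lin_sum[OF l] lin_scale[OF l] by (rule refl)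
      have "SI mu 1 y (Om s) = SI mu 1 h (Om s) + SI mu 1 (\<Sum>t\<in>T. sC (b t) t) (Om s)"
        unfolding yh by (rule lin_add[OF l])
      then have "SI mu 1 y (Om s) = SI mu 1 h (Om s) + (\<Sum>t\<in>T. b t * SI mu 1 t (Om s))"
        unfolding e1 .
      also have "SI mu 1 h (Om s) = 0" using b Om s unfolding h_def Hs_alt by blast
      also have "(\<Sum>t\<in>T. b t * SI mu 1 t (Om s)) = (\<Sum>t\<in>T. if s = t then b t else 0)"
        by (rule sum.cong) (use Om s in auto)
      also have "\<dots> = b s" using finT s by simp
      finally show ?thesis by simp
    qed
    have "(\<Sum>t\<in>T. sC (SI mu 1 y (Om t)) t) = (\<Sum>t\<in>T. sC (b t) t)"
    proof (rule sum.cong[OF refl])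
      fix t assume "t \<in> T" then show "sC (SI mu 1 y (Om t)) t = sC (b t) t" using coef by metis
    qed
    then show "y - (\<Sum>t\<in>T. sC (SI mu 1 y (Om t)) t) \<in> Hs" using b by simp
  qed
qed

end

locale h1x = h1 sC mu eps g S0 for sC :: "'k::field \<Rightarrow> 'c::ab_group_add \<Rightarrow> 'c" and mu eps g S0 +
  fixes xs :: "'c \<Rightarrow> 'c \<Rightarrow> 'k"
  assumes xs_lin: "\<And>j. j \<in> JJ \<Longrightarrow> lin (xs j)"
    and xs_W: "\<And>j y. j \<in> JJ \<Longrightarrow> y \<in> C.span BW \<Longrightarrow> xs j y = coord j y"
begin

lemma xs_g: "j \<in> JJ \<Longrightarrow> xs j g = 0"
  using xs_W[of j g] coord_g BW(1) C.span_base by auto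

definition tau :: "'c \<Rightarrow> 'c \<Rightarrow> 'c" where "tau j c = sw (\<lambda>a b. sC (xs j b) a) (mu c)"

lemma tau_lin: assumes j: "j \<in> JJ" shows "Vector_Spaces.linear sC sC (tau j)"
  unfolding tau_def
  by (rule mu_lin_V[OF vsC lin_scale_fun[OF lin_id[OF vsC]] lin_scale_const[OF xs_lin[OF j] vsC]])

lemma eps_tau: "j \<in> JJ \<Longrightarrow> eps (tau j c) = xs j c"
  unfolding tau_def lin_sw[OF eps_lin]
  using counit_fn_l[OF xs_lin, of j c] by (simp add: lin_scale[OF eps_lin] mult.commute)

lemma tau_g: assumes j: "j \<in> JJ" shows "tau j g = 0"
proof (rule ccontr)
  assume "tau j g \<noteq> 0"
  then obtain F where F: "lin F" "F (tau j g) = 1" using separate_point[OF vsC] by blast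
  have "F (tau j g) = sw (\<lambda>a b. xs j b * F a) (mu g)"
    unfolding tau_def lin_sw[OF F(1)] by (simp add: lin_scale[OF F(1)])
  also have "\<dots> = xs j g * F g"
    by (rule mu_g2[OF lin_mult_left[OF F(1)] lin_mult_right[OF xs_lin[OF j]]])
  also have "\<dots> = 0" using xs_g[OF j] by simp
  finally show False using F(2) by simp
qed

lemma I0:
  assumes j: "j \<in> JJ" and b1: "\<And>y. lin (\<lambda>x. beta x y)" and b2: "\<And>x. lin (\<lambda>y. beta x y)"
  shows "sw beta (mu (tau j c)) = sw (\<lambda>a b. beta a (tau j b)) (mu c)"
proof -
  have Lb: "lin (\<lambda>c. sw beta (mu c))" by (rule mu_bil2[OF b1 b2])
  have "sw beta (mu (tau j c)) = sw (\<lambda>a' b'. xs j b' * sw beta (mu a')) (mu c)"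
    unfolding tau_def lin_sw[OF Lb] by (simp add: lin_scale[OF Lb])
  also have "\<dots> = sw (\<lambda>a' b'. sw (\<lambda>p q. beta p q * xs j b') (mu a')) (mu c)"
    by (simp add: sw_mult_right mult.commute)
  also have "\<dots> = sw (\<lambda>a' b'. sw (\<lambda>p q. beta a' p * xs j q) (mu b')) (mu c)"
  proof (rule coassoc[of "\<lambda>p q r. beta p q * xs j r"])
    show "trilinear_form sC (\<lambda>p q r. beta p q * xs j r)"
      unfolding trilinear_form_def
      by (intro conjI allI lin_mult_right[OF b1] lin_mult_right[OF b2] lin_mult_left[OF xs_lin[OF j]])
  qed
  also have "\<dots> = sw (\<lambda>a b. beta a (tau j b)) (mu c)"
    unfolding tau_def lin_sw[OF b2] by (simp add: lin_scale[OF b2] mult.commute)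
  finally show ?thesis .
qed

lemma I1:
  assumes j: "j \<in> JJ"
  shows "multilinear_form sC (Suc m) Psi \<Longrightarrow>
    SI mu m (tau j c) Psi = SI mu m c (\<lambda>l. Psi (butlast l @ [tau j (last l)]))"
proof (induct m arbitrary: c Psi)
  case 0
  then show ?case by simp
next
  case (Suc m)
  have "SI mu (Suc m) (tau j c) Psi = sw (\<lambda>a b. SI mu m b (\<lambda>l. Psi (a # l))) (mu (tau j c))"
    by (rule SI_Suc)
  also have "\<dots> = sw (\<lambda>a b. SI mu m (tau j b) (\<lambda>l. Psi (a # l))) (mu c)"
  proof (rule I0[OF j])
    fix y show "lin (\<lambda>x. SI mu m y (\<lambda>l. Psi (x # l)))" by (rule SI_lin_head[OF Suc.prems])
  next
    fix x show "lin (\<lambda>y. SI mu m y (\<lambda>l. Psi (x # l)))" by (rule SI_lin[OF MF_tail[OF Suc.prems]])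
  qed
  also have "\<dots> = sw (\<lambda>a b. SI mu m b (\<lambda>l. Psi (a # (butlast l @ [tau j (last l)])))) (mu c)"
    using Suc.hyps[OF MF_tail[OF Suc.prems]] by simp
  also have "\<dots> = sw (\<lambda>a b. SI mu m b (\<lambda>l. Psi (butlast (a # l) @ [tau j (last (a # l))]))) (mu c)"
    by (rule sw_cong, rule SI_cong) (simp add: iter_ne)
  also have "\<dots> = SI mu (Suc m) c (\<lambda>l. Psi (butlast l @ [tau j (last l)]))"
    by (rule SI_Suc[symmetric])
  finally show ?case .
qed

end


lemma MF_init:
  fixes sC :: "'k::field \<Rightarrow> 'c::ab_group_add \<Rightarrow> 'c" and A :: "'c list \<Rightarrow> 'k"
  assumes "multilinear_form sC (Suc n) A"
  shows "multilinear_form sC n (\<lambda>l. A (l @ [v]))"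
  unfolding MF_iff
proof (intro allI impI)
  fix pre post :: "'c list" assume "length pre + length post + 1 = n"
  then have "length pre + length (post @ [v]) + 1 = Suc n" by simp
  then show "Vector_Spaces.linear sC (*) (\<lambda>x. A ((pre @ x # post) @ [v]))"
    using assms unfolding MF_iff by simp
qed

lemma VAN_init:
  fixes sC :: "'k::field \<Rightarrow> 'c::ab_group_add \<Rightarrow> 'c" and A :: "'c list \<Rightarrow> 'k"
  assumes "VAN sC g (Suc n) A"
  shows "VAN sC g n (\<lambda>l. A (l @ [v]))"
  unfolding VAN_iff
proof (intro allI impI)
  fix pre post :: "'c list" and t assume "length pre + length post + 1 = n"
  then have "length pre + length (post @ [v]) + 1 = Suc n" by simp
  then show "A ((pre @ sC t g # post) @ [v]) = 0"
    using assms unfolding VAN_iff by simp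
qed

lemma VAN_mult_const: "VAN sC g n A \<Longrightarrow> VAN sC g n (\<lambda>l. A l * (k::'k::field))"
  unfolding VAN_def by auto

lemma butlast_len: "length l = Suc n \<Longrightarrow> length (butlast l) = n" by simp

context h1
begin

lemma K_apply:
  assumes pa: "plus_annihilated sC mu g (Suc n) c"
    and Mh: "multilinear_form sC (Suc n) Phi"
    and VP: "\<And>v. VAN sC g n (\<lambda>l. Phi (l @ [v]))"
    and LW: "\<And>pre y. length pre = n \<Longrightarrow> y \<in> Hs \<Longrightarrow> Phi (pre @ [y]) = 0"
  shows "SI mu n c Phi = 0"
proof -
  define Y where "Y = last ` set (iter_comult mu n c)"
  have finY: "finite Y" unfolding Y_def by simp
  obtain T Om where T: "finite T" "\<And>t. t \<in> T \<Longrightarrow> multilinear_form sC 2 (Om t) \<and> VAN sC g 2 (Om t)"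
    "\<And>y. y \<in> Y \<Longrightarrow> y - (\<Sum>t\<in>T. sC (SI mu 1 y (Om t)) t) \<in> Hs"
    using K3[OF finY] by metis
  have lin_last: "lin (\<lambda>y. Phi (pre @ [y]))" if "length pre = n" for pre
    using Mh that unfolding MF_iff by simp
  have dec: "Phi l = (\<Sum>t\<in>T. SI mu 1 (last l) (Om t) * Phi (butlast l @ [t]))"
    if l: "l \<in> set (iter_comult mu n c)" for l
  proof -
    define pre where "pre = butlast l"
    define y where "y = last l"
    have lpre: "length pre = n" unfolding pre_def using iter_len[OF l] by simp
    have ly: "l = pre @ [y]" unfolding pre_def y_def using iter_ne[OF l] by simp
    have yY: "y \<in> Y" unfolding Y_def y_def using l by blast
    define z where "z = y - (\<Sum>t\<in>T. sC (SI mu 1 y (Om t)) t)"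
    have zH: "z \<in> Hs" unfolding z_def by (rule T(3)[OF yY])
    have yz: "y = z + (\<Sum>t\<in>T. sC (SI mu 1 y (Om t)) t)" unfolding z_def by simp
    have "Phi l = Phi (pre @ [z + (\<Sum>t\<in>T. sC (SI mu 1 y (Om t)) t)])"
      using ly yz by metis
    also have "\<dots> = Phi (pre @ [z]) + (\<Sum>t\<in>T. SI mu 1 y (Om t) * Phi (pre @ [t]))"
      unfolding lin_add[OF lin_last[OF lpre]] lin_sum[OF lin_last[OF lpre]] lin_scale[OF lin_last[OF lpre]]
      by (rule refl)
    also have "Phi (pre @ [z]) = 0" by (rule LW[OF lpre zH])
    finally show ?thesis unfolding pre_def y_def by simp
  qed
  have "SI mu n c Phi = SI mu n c (\<lambda>l. \<Sum>t\<in>T. SI mu 1 (last l) (Om t) * Phi (butlast l @ [t]))"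
    by (rule SI_cong) (rule dec)
  also have "\<dots> = (\<Sum>t\<in>T. SI mu n c (\<lambda>l. SI mu 1 (last l) (Om t) * Phi (butlast l @ [t])))"
    by (rule SI_sum)
  also have "\<dots> = 0"
  proof (rule sum.neutral, rule ballI)
    fix t assume t: "t \<in> T"
    define Psi where "Psi = (\<lambda>l. Phi (take n l @ [t]) * Om t (drop n l))"
    have MhP: "multilinear_form sC (Suc (Suc n)) Psi"
      using MF_concat[OF MF_init[OF Mh, of t] conjunct1[OF T(2)[OF t]]] unfolding Psi_def by simp
    have VP2: "VAN sC g (Suc (Suc n)) Psi"
      using VAN_concat[OF VP[of t] conjunct2[OF T(2)[OF t]]] unfolding Psi_def by simp
    have "SI mu (Suc n) c Psi = 0" using pa MhP VP2 unfolding pa_alt by blast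
    moreover have "SI mu (Suc n) c Psi = SI mu n c (\<lambda>l. SI mu 1 (last l) (Om t) * Phi (butlast l @ [t]))"
      unfolding SI_expand_last
    proof (rule SI_cong)
      fix l assume l: "l \<in> set (iter_comult mu n c)"
      have lb: "length (butlast l) = n" using iter_len[OF l] by simp
      have "sw (\<lambda>a b. Psi (butlast l @ [a, b])) (mu (last l)) = sw (\<lambda>a b. Phi (butlast l @ [t]) * Om t [a, b]) (mu (last l))"
        unfolding Psi_def using lb by simp
      also have "\<dots> = Phi (butlast l @ [t]) * SI mu 1 (last l) (Om t)"
        by (simp add: sw_mult_left SI_Suc)
      finally show "sw (\<lambda>a b. Psi (butlast l @ [a, b])) (mu (last l)) = SI mu 1 (last l) (Om t) * Phi (butlast l @ [t])"
        by (simp add: mult.commute)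
    qed
    ultimately show "SI mu n c (\<lambda>l. SI mu 1 (last l) (Om t) * Phi (butlast l @ [t])) = 0" by simp
  qed
  finally show ?thesis .
qed

end

context h1x
begin

lemma MF_last_form:
  assumes Mh: "multilinear_form sC (Suc n) Phi" and f: "lin f"
  shows "multilinear_form sC (Suc n) (\<lambda>l. Phi (butlast l @ [j]) * f (last l))"
proof (rule MF_cong[of "Suc n" "\<lambda>l. Phi (take n l @ [j]) * f (hd (drop n l))"])
  fix l :: "'c list" assume "length l = Suc n"
  then have "last l = l ! n" by (cases l rule: rev_cases) (auto simp: nth_append)
  moreover have "butlast l = take n l" "hd (drop n l) = l ! n" using \<open>length l = Suc n\<close>
    by (auto simp: butlast_conv_take hd_drop_conv_nth)
  ultimately show "Phi (take n l @ [j]) * f (hd (drop n l)) = Phi (butlast l @ [j]) * f (last l)"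
    by simp
next
  have "multilinear_form sC (Suc 0) (\<lambda>l. f (hd l))" unfolding MF_iff using f by auto
  then show "multilinear_form sC (Suc n) (\<lambda>l. Phi (take n l @ [j]) * f (hd (drop n l)))"
    using MF_concat[OF MF_init[OF Mh, of j], of "Suc 0" "\<lambda>l. f (hd l)"] by simp
qed

lemma claimA_step:
  assumes pa: "plus_annihilated sC mu g (Suc n) c" and t0: "\<And>j. j \<in> JJ \<Longrightarrow> tau j c = 0"
  shows "plus_annihilated sC mu g n c"
  unfolding pa_alt
proof (intro allI impI)
  fix Phi assume A: "multilinear_form sC (Suc n) Phi \<and> VAN sC g (Suc n) Phi"
  then have Mh: "multilinear_form sC (Suc n) Phi" and VA: "VAN sC g (Suc n) Phi" by auto
  define Q where "Q j = (\<lambda>l. Phi (butlast l @ [j]) * xs j (last l))" for j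
  define Phi' where "Phi' = (\<lambda>l. Phi l - (\<Sum>j\<in>JJ. Q j l))"
  have a: "SI mu n c (Q j) = 0" if j: "j \<in> JJ" for j
  proof -
    define Psi where "Psi = (\<lambda>l. Phi (butlast l @ [j]) * eps (last l))"
    have MhP: "multilinear_form sC (Suc n) Psi" unfolding Psi_def by (rule MF_last_form[OF Mh eps_lin])
    have "SI mu n (tau j c) Psi = SI mu n c (\<lambda>l. Psi (butlast l @ [tau j (last l)]))"
      by (rule I1[OF j MhP])
    also have "\<dots> = SI mu n c (Q j)"
      by (rule SI_cong) (simp add: Psi_def Q_def eps_tau[OF j])
    finally have "SI mu n c (Q j) = SI mu n (tau j c) Psi" by simp
    also have "\<dots> = 0" using t0[OF j] lin_0[OF SI_lin[OF MhP]] by simp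
    finally show ?thesis .
  qed
  have b: "SI mu n c Phi' = 0"
  proof (rule K_apply[OF pa])
    have "multilinear_form sC (Suc n) (\<lambda>l. \<Sum>j\<in>JJ. Q j l)"
      by (rule MF_sum[OF vsC]) (unfold Q_def, rule MF_last_form[OF Mh xs_lin])
    then show "multilinear_form sC (Suc n) Phi'" unfolding Phi'_def by (rule MF_diff[OF Mh])
  next
    fix v
    have "VAN sC g n (\<lambda>l. Phi (l @ [v]) - (\<Sum>j\<in>JJ. Phi (l @ [j]) * xs j v))"
      by (intro VAN_diff VAN_sum VAN_mult_const VAN_init[OF VA])
    then show "VAN sC g n (\<lambda>l. Phi' (l @ [v]))" by (simp add: Phi'_def Q_def)
  next
    fix pre :: "'c list" and y assume lp: "length pre = n" and yH: "y \<in> Hs"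
    have yW: "y \<in> C.span BW" by (rule Hs_W[OF yH])
    have ll: "lin (\<lambda>y. Phi (pre @ [y]))" using Mh lp unfolding MF_iff by simp
    have BWJ: "BW = insert g JJ" "g \<notin> JJ" unfolding JJ_def using BW(1) by auto
    have "Phi (pre @ sC 1 g # []) = 0" using VA[unfolded VAN_iff, rule_format, of pre "[]" 1] lp by simp
    then have g0: "Phi (pre @ [g]) = 0" by simp
    have "Phi (pre @ [y]) = Phi (pre @ [(\<Sum>b\<in>BW. sC (coord b y) b)])"
      by (rule arg_cong[OF W_expand[OF yW]])
    also have "\<dots> = (\<Sum>b\<in>BW. coord b y * Phi (pre @ [b]))"
      unfolding lin_sum[OF ll] lin_scale[OF ll] by (rule refl)
    also have "\<dots> = (\<Sum>b\<in>JJ. coord b y * Phi (pre @ [b]))"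
      using BWJ finJJ g0 by simp
    also have "\<dots> = (\<Sum>j\<in>JJ. Q j (pre @ [y]))"
      by (rule sum.cong) (auto simp: Q_def xs_W[OF _ yW] mult.commute)
    finally show "Phi' (pre @ [y]) = 0" by (simp add: Phi'_def)
  qed
  have "SI mu n c Phi = SI mu n c Phi' + (\<Sum>j\<in>JJ. SI mu n c (Q j))"
    unfolding Phi'_def SI_diff SI_sum by simp
  also have "\<dots> = 0" using a b by simp
  finally show "SI mu n c Phi = 0" .
qed

lemma claimA:
  assumes t0: "\<And>j. j \<in> JJ \<Longrightarrow> tau j c = 0"
  shows "c \<in> C.span {g}"
proof -
  obtain n where "plus_annihilated sC mu g n c" using conil by blast
  then show ?thesis
  proof (induct n)
    case 0
    then show ?case by (rule PA0)
  next
    case (Suc n)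
    then show ?case using claimA_step[OF _ t0] by blast
  qed
qed

end


context h1x
begin

definition sG :: "'k \<Rightarrow> ('c \<Rightarrow> 'c) \<Rightarrow> ('c \<Rightarrow> 'c)" where "sG a f = (\<lambda>j. sC a (f j))"

lemma vsG: "vector_space sG"
  by unfold_locales (auto simp: sG_def fun_eq_iff plus_fun_def C.scale_right_distrib C.scale_left_distrib)

definition tv :: "'c \<Rightarrow> ('c \<Rightarrow> 'c)" where "tv c = (\<lambda>j. if j \<in> JJ then tau j c else 0)"

lemma tv_lin: "Vector_Spaces.linear sC sG tv"
proof (rule linI[OF vsC vsG])
  fix c c'
  show "tv (c + c') = tv c + tv c'"
    by (auto simp: tv_def fun_eq_iff plus_fun_def lin_add[OF tau_lin])
next
  fix a c
  show "tv (sC a c) = sG a (tv c)"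
    by (auto simp: tv_def sG_def fun_eq_iff lin_scale[OF tau_lin])
qed

lemma tv_g: "tv g = 0"
  by (auto simp: tv_def fun_eq_iff tau_g)

definition V0 :: "'c set" where "V0 = C.span (Bf - {g})"

lemma g_notin_V0: "g \<notin> V0"
proof
  assume "g \<in> V0"
  then have "C.dependent Bf" unfolding V0_def C.dependent_def using Bf(1) BW(1) by blast
  then show False using Bf(2) by simp
qed

lemma inj_tv: "inj_on tv V0"
proof (rule inj_onI)
  fix u v assume u: "u \<in> V0" and v: "v \<in> V0" and e: "tv u = tv v"
  define d where "d = u - v"
  have dV: "d \<in> V0" unfolding d_def V0_def using u v unfolding V0_def by (rule C.span_diff)
  have "tv d = 0" unfolding d_def using e lin_diff[OF tv_lin] by simp
  then have "\<And>j. j \<in> JJ \<Longrightarrow> tau j d = 0"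
  proof -
    fix j assume j: "j \<in> JJ"
    have "tv d j = 0" using \<open>tv d = 0\<close> by simp
    then show "tau j d = 0" using j by (simp add: tv_def)
  qed
  then have "d \<in> C.span {g}" by (rule claimA)
  then obtain k where k: "d = sC k g" unfolding C.span_singleton by blast
  have "k = 0"
  proof (rule ccontr)
    assume "k \<noteq> 0"
    then have "g = sC (inverse k) d" using k by simp
    moreover have "sC (inverse k) d \<in> V0" using dV unfolding V0_def by (rule C.span_scale)
    ultimately have "g \<in> V0" by simp
    then show False using g_notin_V0 by simp
  qed
  then show "u = v" using k by (simp add: d_def)
qed

lemma lemmaA:
  fixes sV :: "'k \<Rightarrow> 'v::ab_group_add \<Rightarrow> 'v"
  assumes vs: "vector_space sV" and h: "Vector_Spaces.linear sC sV h" and hg: "h g = 0"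
  shows "\<exists>hj. (\<forall>j\<in>JJ. Vector_Spaces.linear sC sV (hj j)) \<and>
      (\<forall>c. h c = (\<Sum>j\<in>JJ. sw (\<lambda>a b. sV (xs j b) (hj j a)) (mu c)))"
proof -
  interpret V: vector_space sV by (rule vs)
  interpret G: vector_space sG by (rule vsG)
  interpret pr: vector_space_pair sC sG by unfold_locales
  have "C.subspace V0" unfolding V0_def by simp
  then obtain sig where sig: "Vector_Spaces.linear sG sC sig" "\<forall>v\<in>V0. sig (tv v) = v"
    using pr.linear_exists_left_inverse_on[OF tv_lin _ inj_tv] by blast
  define io :: "'c \<Rightarrow> 'c \<Rightarrow> ('c \<Rightarrow> 'c)" where "io j y = (\<lambda>i. if i = j then y else 0)" for j y
  have iolin: "Vector_Spaces.linear sC sG (io j)" for j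
    by (rule linI[OF vsC vsG]) (auto simp: io_def sG_def fun_eq_iff plus_fun_def)
  define hj where "hj j = (\<lambda>y. h (sig (io j y)))" for j
  have hsig: "Vector_Spaces.linear sG sV (\<lambda>v. h (sig v))" by (rule lin_comp[OF sig(1) h])
  have hjlin: "Vector_Spaces.linear sC sV (hj j)" for j
    unfolding hj_def by (rule lin_comp[OF iolin hsig])
  show ?thesis
  proof (intro exI conjI allI ballI)
    fix j show "Vector_Spaces.linear sC sV (hj j)" by (rule hjlin)
  next
    fix c
    have "insert g (Bf - {g}) = Bf" using Bf(1) BW(1) by auto
    then have "c \<in> C.span (insert g (Bf - {g}))" using Bf(3) by simp
    then obtain k where k: "c - sC k g \<in> V0" unfolding C.span_insert V0_def by blast
    have "(\<Sum>j\<in>JJ. sw (\<lambda>a b. sV (xs j b) (hj j a)) (mu c)) = (\<Sum>j\<in>JJ. hj j (tau j c))"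
    proof (rule sum.cong[OF refl])
      fix j
      show "sw (\<lambda>a b. sV (xs j b) (hj j a)) (mu c) = hj j (tau j c)"
        unfolding tau_def lin_sw[OF hjlin] lin_scale[OF hjlin] by (rule refl)
    qed
    also have "\<dots> = h (sig (\<Sum>j\<in>JJ. io j (tau j c)))"
      unfolding hj_def lin_sum[OF hsig] by (rule refl)
    also have "(\<Sum>j\<in>JJ. io j (tau j c)) = tv c"
    proof
      fix i
      have "(\<Sum>j\<in>JJ. io j (tau j c)) i = (\<Sum>j\<in>JJ. if i = j then tau j c else 0)"
        unfolding fsum_apply io_def by (rule refl)
      also have "\<dots> = tv c i" using finJJ by (simp add: tv_def)
      finally show "(\<Sum>j\<in>JJ. io j (tau j c)) i = tv c i" .
    qed
    also have "tv c = tv (c - sC k g)"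
    proof -
      have "tv (c - sC k g) = tv c - sG k (tv g)" unfolding lin_diff[OF tv_lin] lin_scale[OF tv_lin] by (rule refl)
      also have "\<dots> = tv c" unfolding tv_g G.scale_zero_right by simp
      finally show ?thesis by simp
    qed
    also have "sig (tv (c - sC k g)) = c - sC k g" using sig(2) k by blast
    also have "h (c - sC k g) = h c" using lin_diff[OF h] lin_scale[OF h] hg by simp
    finally show "h c = (\<Sum>j\<in>JJ. sw (\<lambda>a b. sV (xs j b) (hj j a)) (mu c))" by simp
  qed
qed

end


context contra
begin

lemma act_sum_fn: "(\<And>j. j \<in> I \<Longrightarrow> lin (phi j)) \<Longrightarrow> act (\<lambda>c. \<Sum>j\<in>I. phi j c) p = (\<Sum>j\<in>I. act (phi j) p)"
  unfolding contra_act_def by (simp add: P.scale_sum_left pi_sum linP_act)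

end

lemma main_R:
  fixes sC :: "'k::field \<Rightarrow> 'c::ab_group_add \<Rightarrow> 'c" and mu eps g
    and sP :: "'k \<Rightarrow> 'p::ab_group_add \<Rightarrow> 'p" and piP
    and sQ :: "'k \<Rightarrow> 'q::ab_group_add \<Rightarrow> 'q" and piQ
  assumes co: "coalgebra sC mu eps" and cn: "conilpotent_wrt sC mu eps g" and hf: "H1_finite_dim sC mu g"
    and cP: "contramodule sC mu eps sP piP" and cQ: "contramodule sC mu eps sQ piQ"
    and R: "dense_subring sC mu eps R"
  shows "contra_hom sC sP piP sQ piQ f \<longleftrightarrow> R_module_hom R sP piP sQ piQ f"
proof -
  have coaugF: "coaug sC mu eps g"
    using co cn by (simp add: coaug_def coalg_def coaug_axioms_def conilpotent_wrt_def)
  interpret coaug sC mu eps g by (rule coaugF)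
  obtain S0 where S0: "finite S0" "\<And>x. plus_annihilated sC mu g 1 x \<Longrightarrow> x \<in> C.span (insert g S0)"
    using hf unfolding H1_finite_dim_def by blast
  have conil: "\<And>c. \<exists>n. plus_annihilated sC mu g n c" using cn by (simp add: conilpotent_wrt_def)
  have h1F: "h1 sC mu eps g S0" using coaugF S0 conil by (simp add: h1_def h1_axioms_def)
  interpret h: h1 sC mu eps g S0 by (rule h1F)
  have Rd: "R \<subseteq> dual sC" and epsR: "eps \<in> R"
    and dens: "\<And>phi B. phi \<in> dual sC \<Longrightarrow> finite B \<Longrightarrow> \<exists>r\<in>R. \<forall>x\<in>C.span B. r x = phi x"
    using R unfolding dense_subring_def by auto
  have Rlin: "r \<in> R \<Longrightarrow> lin r" for r using Rd by (auto simp: dual_def)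
  define xs where "xs j = (SOME r. r \<in> R \<and> (\<forall>x\<in>C.span h.BW. r x = h.coord j x))" for j
  have xs: "xs j \<in> R \<and> (\<forall>x\<in>C.span h.BW. xs j x = h.coord j x)" for j
  proof -
    have "\<exists>r\<in>R. \<forall>x\<in>C.span h.BW. r x = h.coord j x"
      using dens[of "h.coord j" h.BW] h.coord_lin h.finBW by (simp add: dual_def)
    then show ?thesis unfolding xs_def by (rule someI_ex[where P="\<lambda>r. r \<in> R \<and> _ r", OF bexE]) blast+
  qed
  have h1xF: "h1x sC mu eps g S0 xs"
    using h1F xs Rlin by (simp add: h1x_def h1x_axioms_def)
  interpret hx: h1x sC mu eps g S0 xs by (rule h1xF)
  have cPF: "contra sC mu eps sP piP" using co cP by (simp add: contra_def contra_axioms_def coalg_def)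
  have cQF: "contra sC mu eps sQ piQ" using co cQ by (simp add: contra_def contra_axioms_def coalg_def)
  interpret P: contra sC mu eps sP piP by (rule cPF)
  interpret Q: contra sC mu eps sQ piQ by (rule cQF)
  have teleF: "tele sC mu eps sQ piQ g h.JJ xs"
    using cQF coaugF h.finJJ hx.xs_lin hx.xs_g conil by (simp add: tele_def tele_axioms_def)
  interpret T: tele sC mu eps sQ piQ g h.JJ xs by (rule teleF)
  show ?thesis
  proof
    assume ch: "contra_hom sC sP piP sQ piQ f"
    then have fl: "Vector_Spaces.linear sP sQ f" and fh: "\<And>h. P.linP h \<Longrightarrow> f (piP h) = piQ (f \<circ> h)"
      unfolding contra_hom_def by auto
    show "R_module_hom R sP piP sQ piQ f"
      unfolding R_module_hom_def
    proof (intro conjI allI ballI)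
      fix p p' show "f (p + p') = f p + f p'" by (rule lin_add[OF fl])
    next
      fix r p assume r: "r \<in> R"
      have "f (contra_act sP piP r p) = piQ (f \<circ> (\<lambda>c. sP (r c) p))"
        unfolding contra_act_def by (rule fh[OF P.linP_act[OF Rlin[OF r]]])
      also have "\<dots> = contra_act sQ piQ r (f p)"
        unfolding contra_act_def comp_def lin_scale[OF fl] by (rule refl)
      finally show "f (contra_act sP piP r p) = contra_act sQ piQ r (f p)" .
    qed
  next
    assume rh: "R_module_hom R sP piP sQ piQ f"
    then have fadd: "\<And>p p'. f (p + p') = f p + f p'"
      and fR: "\<And>r p. r \<in> R \<Longrightarrow> f (contra_act sP piP r p) = contra_act sQ piQ r (f p)"
      unfolding R_module_hom_def by auto
    have f0: "f 0 = 0" by (rule add_hom_0[OF fadd])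
    have fdiff: "f (p - p') = f p - f p'" for p p'
      by (metis add_diff_cancel fadd eq_diff_eq)
    have fsum: "f (\<Sum>i\<in>I. v i) = (\<Sum>i\<in>I. f (v i))" for I and v :: "'i \<Rightarrow> 'p"
      by (induct I rule: infinite_finite_induct) (auto simp: f0 fadd)
    have xsR: "j \<in> h.JJ \<Longrightarrow> xs j \<in> R" for j using xs by blast
    have xl: "j \<in> h.JJ \<Longrightarrow> lin (xs j)" for j by (rule hx.xs_lin)
    have fact: "f (contra_act sP piP xi p) = contra_act sQ piQ xi (f p)" if xi: "lin xi" for xi p
    proof -
      define D where "D xi = (if lin xi then f (contra_act sP piP xi p) - contra_act sQ piQ xi (f p) else 0)" for xi
      have "D xi = 0"
      proof (rule T.telescope[where D=D])
        fix xi :: "'c \<Rightarrow> 'k"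
        show "\<exists>eta. D xi = (\<Sum>j\<in>h.JJ. contra_act sQ piQ (xs j) (D (eta j)))"
        proof (cases "lin xi")
          case False
          show ?thesis
          proof (intro exI[where x="\<lambda>j. xi"])
            show "D xi = (\<Sum>j\<in>h.JJ. contra_act sQ piQ (xs j) (D ((\<lambda>j. xi) j)))"
              using False by (simp add: D_def Q.act_zero_p xl)
          qed
        next
          case True
          obtain r where r: "r \<in> R" "\<forall>x\<in>C.span {g}. r x = xi x"
            using dens[of xi "{g}"] True by (auto simp: dual_def)
          define z where "z c = xi c - r c" for c
          have zl: "lin z" unfolding z_def by (rule lin_diff_fun[OF True Rlin[OF r(1)]])
          have zg: "z g = 0" unfolding z_def using r(2) C.span_base[of g "{g}"] by simp
          obtain zj where zj: "\<forall>j\<in>h.JJ. lin (zj j)"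
            "\<forall>c. z c = (\<Sum>j\<in>h.JJ. sw (\<lambda>a b. xs j b * zj j a) (mu c))"
            using hx.lemmaA[OF vs_field zl zg] by blast
          have zdm: "z = (\<lambda>c. \<Sum>j\<in>h.JJ. dual_mult mu (xs j) (zj j) c)"
            using zj(2) by (auto simp: fun_eq_iff dual_mult_def mult.commute)
          have dml: "lin (dual_mult mu (xs j) (zj j))" if "j \<in> h.JJ" for j
            unfolding dual_mult_def
            by (rule mu_bil2[OF lin_mult_right lin_mult_left]) (use zj(1) that xl in auto)
          have xiz: "xi = (\<lambda>c. z c + r c)" by (simp add: z_def fun_eq_iff)
          have actP_z: "contra_act sP piP z p = (\<Sum>j\<in>h.JJ. contra_act sP piP (xs j) (contra_act sP piP (zj j) p))"
          proof -
            have "contra_act sP piP z p = (\<Sum>j\<in>h.JJ. contra_act sP piP (dual_mult mu (xs j) (zj j)) p)"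
              unfolding zdm by (rule P.act_sum_fn) (rule dml)
            also have "\<dots> = (\<Sum>j\<in>h.JJ. contra_act sP piP (xs j) (contra_act sP piP (zj j) p))"
              by (rule sum.cong[OF refl], rule P.CM3[symmetric]) (use xl zj(1) in auto)
            finally show ?thesis .
          qed
          have actQ_z: "contra_act sQ piQ z (f p) = (\<Sum>j\<in>h.JJ. contra_act sQ piQ (xs j) (contra_act sQ piQ (zj j) (f p)))"
          proof -
            have "contra_act sQ piQ z (f p) = (\<Sum>j\<in>h.JJ. contra_act sQ piQ (dual_mult mu (xs j) (zj j)) (f p))"
              unfolding zdm by (rule Q.act_sum_fn) (rule dml)
            also have "\<dots> = (\<Sum>j\<in>h.JJ. contra_act sQ piQ (xs j) (contra_act sQ piQ (zj j) (f p)))"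
              by (rule sum.cong[OF refl], rule Q.CM3[symmetric]) (use xl zj(1) in auto)
            finally show ?thesis .
          qed
          have "D xi = f (contra_act sP piP z p) + f (contra_act sP piP r p)
               - (contra_act sQ piQ z (f p) + contra_act sQ piQ r (f p))"
            unfolding D_def using True by (simp add: xiz P.act_add_fn[OF zl Rlin[OF r(1)]] Q.act_add_fn[OF zl Rlin[OF r(1)]] fadd)
          also have "\<dots> = f (contra_act sP piP z p) - contra_act sQ piQ z (f p)"
            using fR[OF r(1)] by simp
          also have "\<dots> = (\<Sum>j\<in>h.JJ. contra_act sQ piQ (xs j) (f (contra_act sP piP (zj j) p)))
               - (\<Sum>j\<in>h.JJ. contra_act sQ piQ (xs j) (contra_act sQ piQ (zj j) (f p)))"
            unfolding actP_z actQ_z fsum using fR xsR by simp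
          also have "\<dots> = (\<Sum>j\<in>h.JJ. contra_act sQ piQ (xs j) (D (zj j)))"
            unfolding sum_subtractf[symmetric]
            by (rule sum.cong[OF refl]) (simp add: D_def zj(1) Q.act_diff_p xl)
          finally show ?thesis by blast
        qed
      qed
      then show ?thesis using xi by (simp add: D_def)
    qed
    have fl: "Vector_Spaces.linear sP sQ f"
    proof (rule linI[OF P.vsP Q.vsP fadd])
      fix a p
      have "f (sP a p) = f (contra_act sP piP (\<lambda>c. a * eps c) p)" by (simp add: P.act_scal)
      also have "\<dots> = contra_act sQ piQ (\<lambda>c. a * eps c) (f p)" by (rule fact[OF lin_mult_left[OF eps_lin]])
      also have "\<dots> = sQ a (f p)" by (rule Q.act_scal)
      finally show "f (sP a p) = sQ a (f p)" .
    qed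
    have fpi: "f (piP h) = piQ (\<lambda>c. f (h c))" if hl: "P.linP h" for h
    proof -
      define D where "D h = (if P.linP h then f (piP h) - piQ (\<lambda>c. f (h c)) else 0)" for h
      have "D h = 0"
      proof (rule T.telescope[where D=D])
        fix h :: "'c \<Rightarrow> 'p"
        show "\<exists>eta. D h = (\<Sum>j\<in>h.JJ. contra_act sQ piQ (xs j) (D (eta j)))"
        proof (cases "P.linP h")
          case False
          show ?thesis
          proof (intro exI[where x="\<lambda>j. h"])
            show "D h = (\<Sum>j\<in>h.JJ. contra_act sQ piQ (xs j) (D ((\<lambda>j. h) j)))"
              using False by (simp add: D_def Q.act_zero_p xl)
          qed
        next
          case True
          define h' where "h' c = h c - sP (eps c) (h g)" for c
          have h'l: "P.linP h'" unfolding h'_def by (rule lin_diff_fun[OF True P.linP_act[OF eps_lin]])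
          have h'g: "h' g = 0" by (simp add: h'_def eps_g)
          obtain hj where hj: "\<forall>j\<in>h.JJ. P.linP (hj j)"
            "\<forall>c. h' c = (\<Sum>j\<in>h.JJ. sw (\<lambda>a b. sP (xs j b) (hj j a)) (mu c))"
            using hx.lemmaA[OF P.vsP h'l h'g] by blast
          have swl: "P.linP (\<lambda>c. sw (\<lambda>a b. sP (xs j b) (hj j a)) (mu c))" if j: "j \<in> h.JJ" for j
            by (rule mu_lin_V[OF P.vsP lin_scale_fun lin_scale_const[OF xl[OF j] P.vsP]]) (use hj j in auto)
          have swlQ: "Q.linP (\<lambda>c. sw (\<lambda>a b. sQ (xs j b) (f (hj j a))) (mu c))" if j: "j \<in> h.JJ" for j
            by (rule mu_lin_V[OF Q.vsP lin_scale_fun lin_scale_const[OF xl[OF j] Q.vsP]])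
              (use hj j lin_comp[OF _ fl] in auto)
          have hdec: "h = (\<lambda>c. h' c + sP (eps c) (h g))" by (simp add: h'_def fun_eq_iff)
          have piPh': "piP h' = (\<Sum>j\<in>h.JJ. contra_act sP piP (xs j) (piP (hj j)))"
          proof -
            have "piP h' = piP (\<lambda>c. \<Sum>j\<in>h.JJ. sw (\<lambda>a b. sP (xs j b) (hj j a)) (mu c))"
              using hj(2) by (metis ext)
            also have "\<dots> = (\<Sum>j\<in>h.JJ. piP (\<lambda>c. sw (\<lambda>a b. sP (xs j b) (hj j a)) (mu c)))"
              by (rule P.pi_sum) (rule swl)
            also have "\<dots> = (\<Sum>j\<in>h.JJ. contra_act sP piP (xs j) (piP (hj j)))"
              by (rule sum.cong[OF refl], rule P.CM2[symmetric]) (use xl hj(1) in auto)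
            finally show ?thesis .
          qed
          have fh'eq: "(\<lambda>c. f (h' c)) = (\<lambda>c. \<Sum>j\<in>h.JJ. sw (\<lambda>a b. sQ (xs j b) (f (hj j a))) (mu c))"
            using hj(2) by (simp add: fun_eq_iff lin_sum[OF fl] lin_sw[OF fl] lin_scale[OF fl])
          have fhj: "Q.linP (\<lambda>c. f (hj j c))" if "j \<in> h.JJ" for j using lin_comp[OF _ fl] hj(1) that by blast
          have piQfh': "piQ (\<lambda>c. f (h' c)) = (\<Sum>j\<in>h.JJ. contra_act sQ piQ (xs j) (piQ (\<lambda>c. f (hj j c))))"
          proof -
            have "piQ (\<lambda>c. f (h' c)) = (\<Sum>j\<in>h.JJ. piQ (\<lambda>c. sw (\<lambda>a b. sQ (xs j b) (f (hj j a))) (mu c)))"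
              unfolding fh'eq by (rule Q.pi_sum) (rule swlQ)
            also have "\<dots> = (\<Sum>j\<in>h.JJ. contra_act sQ piQ (xs j) (piQ (\<lambda>c. f (hj j c))))"
              by (rule sum.cong[OF refl], rule Q.CM2[symmetric]) (use xl fhj in auto)
            finally show ?thesis .
          qed
          have fhl: "Q.linP (\<lambda>c. f (h c))" by (rule lin_comp[OF True fl])
          have fh'l: "Q.linP (\<lambda>c. f (h' c))" by (rule lin_comp[OF h'l fl])
          have e1: "piP h = piP h' + h g"
            using P.pi_add[OF h'l P.linP_act[OF eps_lin]] P.pi_eps hdec by metis
          have e2: "piQ (\<lambda>c. f (h c)) = piQ (\<lambda>c. f (h' c)) + f (h g)"
          proof -
            have "(\<lambda>c. f (h c)) = (\<lambda>c. f (h' c) + sQ (eps c) (f (h g)))"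
              by (simp add: h'_def fun_eq_iff lin_diff[OF fl] lin_scale[OF fl])
            then show ?thesis using Q.pi_add[OF fh'l Q.linP_act[OF eps_lin]] Q.pi_eps by metis
          qed
          have "D h = f (piP h') - piQ (\<lambda>c. f (h' c))"
            using True e1 e2 by (simp add: D_def fadd)
          also have "\<dots> = (\<Sum>j\<in>h.JJ. contra_act sQ piQ (xs j) (f (piP (hj j))))
               - (\<Sum>j\<in>h.JJ. contra_act sQ piQ (xs j) (piQ (\<lambda>c. f (hj j c))))"
            unfolding piPh' piQfh' fsum using fR xsR by simp
          also have "\<dots> = (\<Sum>j\<in>h.JJ. contra_act sQ piQ (xs j) (D (hj j)))"
            unfolding sum_subtractf[symmetric]
            by (rule sum.cong[OF refl]) (simp add: D_def hj(1) Q.act_diff_p xl)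
          finally show ?thesis by blast
        qed
      qed
      then show ?thesis using hl by (simp add: D_def)
    qed
    show "contra_hom sC sP piP sQ piQ f"
      unfolding contra_hom_def using fl fpi by (simp add: comp_def)
  qed
qed

lemma dual_dense:
  fixes sC :: "'k::field \<Rightarrow> 'c::ab_group_add \<Rightarrow> 'c"
  assumes co: "coalgebra sC mu eps"
  shows "dense_subring sC mu eps (dual sC)"
proof -
  interpret coalg sC mu eps by unfold_locales (rule co)
  show ?thesis
    unfolding dense_subring_def
  proof (intro conjI ballI allI impI)
    show "dual sC \<subseteq> dual sC" by simp
    show "eps \<in> dual sC" using eps_lin by (simp add: dual_def)
  next
    fix r s assume "r \<in> dual sC" "s \<in> dual sC"
    then have l: "lin r" "lin s" by (auto simp: dual_def)
    show "(\<lambda>c. r c - s c) \<in> dual sC" using lin_diff_fun[OF l] by (simp add: dual_def)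
    show "dual_mult mu r s \<in> dual sC"
      unfolding dual_mult_def dual_def using mu_bil2[OF lin_mult_right[OF l(2)] lin_mult_left[OF l(1)]] by simp
  next
    fix phi :: "'c \<Rightarrow> 'k" and B :: "'c set" assume "phi \<in> dual sC" "finite B"
    then show "\<exists>r\<in>dual sC. \<forall>x\<in>module.span sC B. r x = phi x" by blast
  qed
qed

theorem theorem1p1:
  fixes sC :: "'k::field \<Rightarrow> 'c::ab_group_add \<Rightarrow> 'c"
    and mu :: "'c \<Rightarrow> ('c \<times> 'c) list" and eps :: "'c \<Rightarrow> 'k" and g :: 'c
    and sP :: "'k \<Rightarrow> 'p::ab_group_add \<Rightarrow> 'p" and piP :: "('c \<Rightarrow> 'p) \<Rightarrow> 'p"
    and sQ :: "'k \<Rightarrow> 'q::ab_group_add \<Rightarrow> 'q" and piQ :: "('c \<Rightarrow> 'q) \<Rightarrow> 'q"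
  assumes "coalgebra sC mu eps"
    and "conilpotent_wrt sC mu eps g"
    and "H1_finite_dim sC mu g"
    and "contramodule sC mu eps sP piP"
    and "contramodule sC mu eps sQ piQ"
  shows "(\<forall>f. contra_hom sC sP piP sQ piQ f \<longleftrightarrow> R_module_hom (dual sC) sP piP sQ piQ f)
    \<and> (\<forall>R. dense_subring sC mu eps R \<longrightarrow>
         (\<forall>f. contra_hom sC sP piP sQ piQ f \<longleftrightarrow> R_module_hom R sP piP sQ piQ f))"
  using main_R[OF assms] dual_dense[OF assms(1)] by blast


end
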